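(* Let $(\mathcal F_d)_{d}$ be a family of base classes $\mathcal F_d\subseteq\{0,1\}^{\{0,1\}^*}$. If $\mathrm{Cons}_{\mathcal F_d}$ can be implemented in time polynomial in the length of its input and in $d$, and $\mathrm{VCdim}(\mathcal F_d)$ is bounded by a polynomial in $d$, then $\mathcal F_d^{\mathrm{e2e}(T)}$ is CoT-learnable in time $\mathrm{poly}(n,d,T,1/\epsilon,\log(1/\delta))$.
   Context: Alphabet $\Sigma=\{0,1\}$. For $f:\Sigma^*\to\Sigma$, $\bar f(\mathbf x)$ is $\mathbf x$ with $f(\mathbf x)$ appended; $f^{\mathrm{CoT}(T)}=\bar f\circ\cdots\circ\bar f$ ($T$ times); $f^{\mathrm{e2e}(T)}(\mathbf x)$ is the last token of $f^{\mathrm{CoT}(T)}(\mathbf x)$; $\mathcal F^{\mathrm{e2e}(T)}=\{f^{\mathrm{e2e}(T)}:f\in\mathcal F\}$. $\mathrm{Cons}_{\mathcal F}$: given pairs $(\mathbf u_i,v_i)$, return some $\hat f\in\mathcal F$ with $\hat f(\mathbf u_i)=v_i$ for all $i$. CoT-learnability over a domain $\mathcal X$: there is a rule $A$ such that for every distribution $\mathcal D$ over $\mathcal X$, every $f_*\in\mathcal F_d$ and all $\epsilon,\delta\in(0,1)$, with probability $\ge1-\delta$ over $\mathbf x_1,\dots,\mathbf x_m$ i.i.d. $\mathcal D$, given $S_{\mathrm{CoT}}=(f_*^{\mathrm{CoT}(T)}(\mathbf x_i))_{i\le m}$ the output $h=A(S_{\mathrm{CoT}})$ satisfies $\Pr_{\mathbf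 x\sim\mathcal D}[h(\mathbf x)\ne f_*^{\mathrm{e2e}(T)}(\mathbf x)]\le\epsilon$. "CoT-learnable in time $\mathrm{time}(n,d,T,\epsilon,\delta)$" means there is such a rule $A$ (given $d,T$) which, over the domain $\mathcal X=\Sigma^{\le n}$ (prompts of length at most $n$), runs in time at most $\mathrm{time}(n,d,T,\epsilon,\delta)$ almost surely, for all $n,d,T,\epsilon,\delta$. *)

theory Defs
  imports "HOL-Probability.Probability" "HOL-Library.Extended_Nat"
begin

definition cot_step :: "(bool list \<Rightarrow> bool) \<Rightarrow> bool list \<Rightarrow> bool list" where
  "cot_step f x = x @ [f x]"

definition cot :: "(bool list \<Rightarrow> bool) \<Rightarrow> nat \<Rightarrow> bool list \<Rightarrow> bool list" where
  "cot f T = (cot_step f ^^ T)"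

definition e2e :: "(bool list \<Rightarrow> bool) \<Rightarrow> nat \<Rightarrow> bool list \<Rightarrow> bool" where
  "e2e f T x = last (cot f T x)"

definition shatters :: "('a \<Rightarrow> bool) set \<Rightarrow> 'a set \<Rightarrow> bool" where
  "shatters F S \<longleftrightarrow> (\<forall>g. \<exists>f\<in>F. \<forall>x\<in>S. f x = g x)"

definition vcdim :: "('a \<Rightarrow> bool) set \<Rightarrow> enat" where
  "vcdim F = Sup {enat (card S) | S. finite S \<and> shatters F S}"

text \<open>Tape symbols are naturals below the machine's alphabet size; 0 is blank,
  1 encodes the bit False (0) and 2 the bit True (1). States are naturals below
  the number of states; 0 is the start state, 1 the halting state.\<close>

datatype move = Left | Right | Stay

type_synonym tm = "nat \<times> nat \<times> (nat \<Rightarrow> nat \<Rightarrow> nat \<times> nat \<times> move)"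
type_synonym config = "nat \<times> (int \<Rightarrow> nat) \<times> int"

definition tm_wf :: "tm \<Rightarrow> bool" where
  "tm_wf M = (case M of (Q, S, \<delta>) \<Rightarrow>
     2 \<le> Q \<and> 3 \<le> S \<and> (\<forall>q<Q. \<forall>s<S. case \<delta> q s of (q', s', _) \<Rightarrow> q' < Q \<and> s' < S))"

fun move_delta :: "move \<Rightarrow> int" where
  "move_delta Left = -1" | "move_delta Right = 1" | "move_delta Stay = 0"

definition tm_step :: "tm \<Rightarrow> config \<Rightarrow> config" where
  "tm_step M c = (case M of (Q, S, \<delta>) \<Rightarrow> case c of (q, tp, p) \<Rightarrow>
     if q = 1 then c
     else (case \<delta> q (tp p) of (q', s', mv) \<Rightarrow> (q', tp(p := s'), p + move_delta mv)))"

definition sym_of_bit :: "bool \<Rightarrow> nat" where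
  "sym_of_bit b = (if b then 2 else 1)"

definition tm_init :: "bool list \<Rightarrow> config" where
  "tm_init x = (0, \<lambda>i. if 0 \<le> i \<and> i < int (length x) then sym_of_bit (x ! nat i) else 0, 0)"

definition tm_run :: "tm \<Rightarrow> nat \<Rightarrow> bool list \<Rightarrow> config" where
  "tm_run M t x = (tm_step M ^^ t) (tm_init x)"

definition tm_halts_within :: "tm \<Rightarrow> nat \<Rightarrow> bool list \<Rightarrow> bool" where
  "tm_halts_within M t x \<longleftrightarrow> fst (tm_run M t x) = 1"

definition tape_output :: "(int \<Rightarrow> nat) \<Rightarrow> bool list" where
  "tape_output tp = (let L = (LEAST k::nat. tp (int k) \<notin> {1, 2})
                     in map (\<lambda>i. tp (int i) = 2) [0..<L])"

definition tm_output :: "tm \<Rightarrow> nat \<Rightarrow> bool list \<Rightarrow> bool list" where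
  "tm_output M t x = tape_output (fst (snd (tm_run M t x)))"

definition enc_str :: "bool list \<Rightarrow> bool list" where
  "enc_str xs = concat (map (\<lambda>b. [True, b]) xs) @ [False, False]"

definition enc_nat :: "nat \<Rightarrow> bool list" where
  "enc_nat n = enc_str (replicate n True)"

definition enc_cons :: "nat \<Rightarrow> (bool list \<times> bool) list \<Rightarrow> bool list" where
  "enc_cons d ps = enc_nat d @ concat (map (\<lambda>(u, v). enc_str u @ enc_str [v]) ps)"

definition enc_learn :: "nat \<Rightarrow> nat \<Rightarrow> bool list list \<Rightarrow> bool list" where
  "enc_learn d T S = enc_nat d @ enc_nat T @ concat (map enc_str S)"

text \<open>rep d r is the member of F_d represented by the output string r.\<close>
definition cons_poly_time ::
  "(nat \<Rightarrow> (bool list \<Rightarrow> bool) set) \<Rightarrow> (nat \<Rightarrow> bool list \<Rightarrow> (bool list \<Rightarrow> bool)) \<Rightarrow> tm \<Rightarrow> bool" where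
  "cons_poly_time F rep M \<longleftrightarrow> tm_wf M \<and>
     (\<exists>c k::nat. \<forall>d ps. (\<exists>f\<in>F d. \<forall>(u, v)\<in>set ps. f u = v) \<longrightarrow>
        (let inp = enc_cons d ps; t = c * (length inp + d + 1) ^ k; r = tm_output M t inp in
          tm_halts_within M t inp \<and> rep d r \<in> F d \<and> (\<forall>(u, v)\<in>set ps. rep d r u = v)))"

primrec iid_pmf :: "'a pmf \<Rightarrow> nat \<Rightarrow> 'a list pmf" where
  "iid_pmf D 0 = return_pmf []"
| "iid_pmf D (Suc m) = bind_pmf D (\<lambda>x. map_pmf (\<lambda>xs. x # xs) (iid_pmf D m))"

text \<open>The learning rule A is a Turing machine receiving d, T and the CoT sample;
  its output string r denotes the predictor (rep d r)^{e2e(T)}.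
  m is the sample size, tb the time bound.\<close>
definition cot_learnable_in_time ::
  "(nat \<Rightarrow> (bool list \<Rightarrow> bool) set) \<Rightarrow> (nat \<Rightarrow> bool list \<Rightarrow> (bool list \<Rightarrow> bool))
   \<Rightarrow> (nat \<Rightarrow> nat \<Rightarrow> nat \<Rightarrow> real \<Rightarrow> real \<Rightarrow> nat) \<Rightarrow> bool" where
  "cot_learnable_in_time F rep tb \<longleftrightarrow>
     (\<exists>A (m :: nat \<Rightarrow> nat \<Rightarrow> nat \<Rightarrow> real \<Rightarrow> real \<Rightarrow> nat). tm_wf A \<and>
       (\<forall>n d T \<epsilon> \<delta>. 0 < \<epsilon> \<and> \<epsilon> < 1 \<and> 0 < \<delta> \<and> \<delta> < 1 \<longrightarrow>
          (let t = tb n d T \<epsilon> \<delta>; mm = m n d T \<epsilon> \<delta> in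
           (\<forall>f\<in>F d. \<forall>xs. length xs = mm \<and> (\<forall>x\<in>set xs. length x \<le> n) \<longrightarrow>
              tm_halts_within A t (enc_learn d T (map (cot f T) xs))) \<and>
           (\<forall>D. \<forall>f\<in>F d. set_pmf D \<subseteq> {x. length x \<le> n} \<longrightarrow>
              measure_pmf.prob (iid_pmf D mm)
                {xs. measure_pmf.prob D
                   {x. e2e (rep d (tm_output A t (enc_learn d T (map (cot f T) xs)))) T x
                       \<noteq> e2e f T x} \<le> \<epsilon>} \<ge> 1 - \<delta>))))"

end

theory Submission
  imports Defs
begin


definition nth0 :: "nat list \<Rightarrow> nat \<Rightarrow> nat" where
  "nth0 xs j = (if j < length xs then xs ! j else 0)"

definition tp_of :: "int \<Rightarrow> nat list \<Rightarrow> nat list \<Rightarrow> int \<Rightarrow> nat" where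
  "tp_of p L R = (\<lambda>i. if p \<le> i then nth0 R (nat (i - p)) else nth0 L (nat (p - 1 - i)))"

definition cfg :: "nat \<Rightarrow> int \<Rightarrow> nat list \<Rightarrow> nat list \<Rightarrow> config" where
  "cfg q p L R = (q, tp_of p L R, p)"

lemma cfg_R_Nil: "cfg q p L [] = cfg q p L [0]"
  unfolding cfg_def tp_of_def nth0_def by (auto intro!: ext simp: nat_less_iff)

lemma cfg_L_Nil: "cfg q p [] R = cfg q p [0] R"
  unfolding cfg_def tp_of_def nth0_def by (auto intro!: ext simp: nat_less_iff)

lemma tp_of_read: "tp_of p L (a # R) p = a"
  unfolding tp_of_def nth0_def by simp

lemma stepR:
  assumes "q \<noteq> 1" "\<delta> q a = (q', s', Right)"
  shows "tm_step (Q, S, \<delta>) (cfg q p L (a # R)) = cfg q' (p + 1) (s' # L) R"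
proof -
  have "(tp_of p L (a # R))(p := s') = tp_of (p + 1) (s' # L) R"
  proof
    fix i
    show "((tp_of p L (a # R))(p := s')) i = tp_of (p + 1) (s' # L) R i"
    proof (cases "i = p")
      case True then show ?thesis by (simp add: tp_of_def nth0_def)
    next
      case False
      show ?thesis
      proof (cases "p < i")
        case True
        then have "nat (i - p) = Suc (nat (i - (p+1)))" by simp
        then show ?thesis using True False by (simp add: tp_of_def nth0_def)
      next
        case F2: False
        then have "nat (p + 1 - 1 - i) = Suc (nat (p - 1 - i))" using False by simp
        then show ?thesis using F2 False by (simp add: tp_of_def nth0_def)
      qed
    qed
  qed
  then show ?thesis using assms unfolding cfg_def tm_step_def by (simp add: tp_of_read)
qed

lemma stepL:
  assumes "q \<noteq> 1" "\<delta> q a = (q', s', Left)"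
  shows "tm_step (Q, S, \<delta>) (cfg q p (b # L) (a # R)) = cfg q' (p - 1) L (b # s' # R)"
proof -
  have "(tp_of p (b # L) (a # R))(p := s') = tp_of (p - 1) L (b # s' # R)"
  proof
    fix i
    show "((tp_of p (b # L) (a # R))(p := s')) i = tp_of (p - 1) L (b # s' # R) i"
    proof (cases "i = p")
      case True then show ?thesis by (simp add: tp_of_def nth0_def)
    next
      case False
      show ?thesis
      proof (cases "p < i")
        case True
        then have "nat (i - (p - 1)) = Suc (Suc (nat (i - p - 1)))" "nat (i - p) = Suc (nat (i - p - 1))" by simp_all
        then show ?thesis using True False by (simp add: tp_of_def nth0_def)
      next
        case F2: False
        show ?thesis
        proof (cases "i = p - 1")
          case True then show ?thesis using F2 False by (simp add: tp_of_def nth0_def)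
        next
          case F3: False
          then have "nat (p - 1 - i) = Suc (nat (p - 1 - 1 - i))" using F2 False by simp
          then show ?thesis using F2 F3 False by (simp add: tp_of_def nth0_def)
        qed
      qed
    qed
  qed
  then show ?thesis using assms unfolding cfg_def tm_step_def by (simp add: tp_of_read)
qed

lemma stepS:
  assumes "q \<noteq> 1" "\<delta> q a = (q', s', Stay)"
  shows "tm_step (Q, S, \<delta>) (cfg q p L (a # R)) = cfg q' p L (s' # R)"
proof -
  have "(tp_of p L (a # R))(p := s') = tp_of p L (s' # R)"
    by (auto intro!: ext simp: tp_of_def nth0_def)
  then show ?thesis using assms unfolding cfg_def tm_step_def by (simp add: tp_of_read)
qed


definition reach :: "tm \<Rightarrow> config \<Rightarrow> nat \<Rightarrow> config \<Rightarrow> bool" where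
  "reach A c B c' \<longleftrightarrow> (\<exists>t\<le>B. (tm_step A ^^ t) c = c')"

lemma reach_refl: "reach A c B c" unfolding reach_def by (rule exI[of _ 0]) simp

lemma reach_trans: "reach A c B1 c' \<Longrightarrow> reach A c' B2 c'' \<Longrightarrow> reach A c (B1 + B2) c''"
  unfolding reach_def
  by (metis (no_types, lifting) add_le_mono funpow_add o_apply add.commute)

lemma reach_mono: "reach A c B c' \<Longrightarrow> B \<le> B' \<Longrightarrow> reach A c B' c'"
  unfolding reach_def using order_trans by blast

lemma reach_exact: "(tm_step A ^^ t) c = c' \<Longrightarrow> t \<le> B \<Longrightarrow> reach A c B c'"
  unfolding reach_def by blast

lemma reach_step: "tm_step A c = c' \<Longrightarrow> reach A c 1 c'"
  by (rule reach_exact[of 1]) simp_all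

lemma reach_trans_eq: "reach A c B1 c' \<Longrightarrow> reach A c' B2 c'' \<Longrightarrow> B1 + B2 \<le> B \<Longrightarrow> reach A c B c''"
  by (meson reach_mono reach_trans)

lemma walkR:
  assumes "q \<noteq> 1" "\<forall>s\<in>set xs. \<delta> q s = (q, g s, Right)"
  shows "(tm_step (Q, S, \<delta>) ^^ length xs) (cfg q p L (xs @ R)) = cfg q (p + int (length xs)) (rev (map g xs) @ L) R"
  using assms(2)
proof (induction xs arbitrary: p L)
  case Nil then show ?case by simp
next
  case (Cons x xs)
  have "(tm_step (Q, S, \<delta>) ^^ length (x # xs)) (cfg q p L ((x # xs) @ R))
      = (tm_step (Q, S, \<delta>) ^^ length xs) (tm_step (Q, S, \<delta>) (cfg q p L (x # xs @ R)))"
    by (simp only: length_Cons length_append_singleton funpow_Suc_right o_apply append_Cons rev.simps append.simps)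
  also have "tm_step (Q, S, \<delta>) (cfg q p L (x # xs @ R)) = cfg q (p + 1) (g x # L) (xs @ R)"
    using Cons.prems assms(1) by (intro stepR) auto
  also have "(tm_step (Q, S, \<delta>) ^^ length xs) (cfg q (p + 1) (g x # L) (xs @ R))
     = cfg q (p + 1 + int (length xs)) (rev (map g xs) @ g x # L) R"
    using Cons by simp
  finally show ?case by (simp add: algebra_simps)
qed

lemma walkL:
  assumes "q \<noteq> 1" "\<forall>s\<in>set (y # ys). \<delta> q s = (q, g s, Left)"
  shows "(tm_step (Q, S, \<delta>) ^^ Suc (length ys)) (cfg q p (rev ys @ z # L) (y # R))
     = cfg q (p - int (Suc (length ys))) L (z # map g ys @ g y # R)"
  using assms(2)
proof (induction ys arbitrary: y p R rule: rev_induct)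
  case Nil
  then show ?case using assms(1) by (simp add: stepL)
next
  case (snoc x ys)
  have "(tm_step (Q, S, \<delta>) ^^ Suc (length (ys @ [x]))) (cfg q p (rev (ys @ [x]) @ z # L) (y # R))
      = (tm_step (Q, S, \<delta>) ^^ Suc (length ys)) (tm_step (Q, S, \<delta>) (cfg q p (x # rev ys @ z # L) (y # R)))"
    by (simp only: length_append_singleton funpow_Suc_right o_apply rev_append rev.simps append.simps)
  also have "tm_step (Q, S, \<delta>) (cfg q p (x # rev ys @ z # L) (y # R)) = cfg q (p - 1) (rev ys @ z # L) (x # g y # R)"
    using snoc.prems assms(1) by (intro stepL) auto
  also have "(tm_step (Q, S, \<delta>) ^^ Suc (length ys)) (cfg q (p - 1) (rev ys @ z # L) (x # g y # R))
     = cfg q (p - 1 - int (Suc (length ys))) L (z # map g ys @ g x # g y # R)"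
    using snoc.prems by (intro snoc.IH) auto
  finally show ?case by (simp add: algebra_simps)
qed

lemma reach_walkR:
  assumes "q \<noteq> 1" "\<forall>s\<in>set xs. \<delta> q s = (q, g s, Right)" "length xs \<le> B"
  shows "reach (Q, S, \<delta>) (cfg q p L (xs @ R)) B (cfg q (p + int (length xs)) (rev (map g xs) @ L) R)"
  by (rule reach_exact[OF walkR[where \<delta>=\<delta>, OF assms(1,2)] assms(3)])

lemma reach_walkL:
  assumes "q \<noteq> 1" "\<forall>s\<in>set (y # ys). \<delta> q s = (q, g s, Left)" "Suc (length ys) \<le> B"
  shows "reach (Q, S, \<delta>) (cfg q p (rev ys @ z # L) (y # R)) B (cfg q (p - int (Suc (length ys))) L (z # map g ys @ g y # R))"
  by (rule reach_exact[OF walkL[where \<delta>=\<delta>, OF assms(1,2)] assms(3)])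

lemma reach_stepR:
  assumes "q \<noteq> 1" "\<delta> q a = (q', s', Right)" "1 \<le> B"
  shows "reach (Q, S, \<delta>) (cfg q p L (a # R)) B (cfg q' (p + 1) (s' # L) R)"
  by (rule reach_mono[OF reach_step[OF stepR[where \<delta>=\<delta>, OF assms(1,2)]] assms(3)])

lemma reach_stepL:
  assumes "q \<noteq> 1" "\<delta> q a = (q', s', Left)" "1 \<le> B"
  shows "reach (Q, S, \<delta>) (cfg q p (b # L) (a # R)) B (cfg q' (p - 1) L (b # s' # R))"
  by (rule reach_mono[OF reach_step[OF stepL[where \<delta>=\<delta>, OF assms(1,2)]] assms(3)])

lemma reach_stepS:
  assumes "q \<noteq> 1" "\<delta> q a = (q', s', Stay)" "1 \<le> B"
  shows "reach (Q, S, \<delta>) (cfg q p L (a # R)) B (cfg q' p L (s' # R))"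
  by (rule reach_mono[OF reach_step[OF stepS[where \<delta>=\<delta>, OF assms(1,2)]] assms(3)])


definition cfg0 :: "nat \<Rightarrow> nat list \<Rightarrow> nat list \<Rightarrow> config" where
  "cfg0 q L R = cfg q (int (length L)) L R"

lemma cfg0_R_Nil: "cfg0 q L [] = cfg0 q L [0]"
  unfolding cfg0_def by (rule cfg_R_Nil)

lemma r0_stepR:
  assumes "q \<noteq> 1" "\<delta> q a = (q', s', Right)" "1 \<le> B"
  shows "reach (Q, S, \<delta>) (cfg0 q L (a # R)) B (cfg0 q' (s' # L) R)"
  using reach_stepR[where \<delta>=\<delta>, OF assms, of Q S "int (length L)" L R] unfolding cfg0_def by (simp add: add.commute)

lemma r0_stepL:
  assumes "q \<noteq> 1" "\<delta> q a = (q', s', Left)" "1 \<le> B"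
  shows "reach (Q, S, \<delta>) (cfg0 q (b # L) (a # R)) B (cfg0 q' L (b # s' # R))"
  using reach_stepL[where \<delta>=\<delta>, OF assms, of Q S "int (length (b # L))" b L R] unfolding cfg0_def by simp

lemma r0_stepS:
  assumes "q \<noteq> 1" "\<delta> q a = (q', s', Stay)" "1 \<le> B"
  shows "reach (Q, S, \<delta>) (cfg0 q L (a # R)) B (cfg0 q' L (s' # R))"
  using reach_stepS[where \<delta>=\<delta>, OF assms] unfolding cfg0_def by simp

lemma r0_walkR:
  assumes "q \<noteq> 1" "\<forall>s\<in>set xs. \<delta> q s = (q, g s, Right)" "length xs \<le> B"
  shows "reach (Q, S, \<delta>) (cfg0 q L (xs @ R)) B (cfg0 q (rev (map g xs) @ L) R)"
  using reach_walkR[where \<delta>=\<delta>, OF assms, of Q S "int (length L)" L R] unfolding cfg0_def by (simp add: add.commute)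

lemma r0_walkL:
  assumes "q \<noteq> 1" "\<forall>s\<in>set (y # ys). \<delta> q s = (q, g s, Left)" "Suc (length ys) \<le> B"
  shows "reach (Q, S, \<delta>) (cfg0 q (rev ys @ z # L) (y # R)) B (cfg0 q L (z # map g ys @ g y # R))"
  using reach_walkL[where \<delta>=\<delta>, OF assms, of Q S "int (length (rev ys @ z # L))" z L R] unfolding cfg0_def by simp

lemma r0_walkL':
  assumes "q0 \<noteq> 1" "q \<noteq> 1" "\<delta> q0 a = (q, a', Left)" "\<forall>s\<in>set ys. \<delta> q s = (q, g s, Left)"
    "Suc (length ys) \<le> B"
  shows "reach (Q, S, \<delta>) (cfg0 q0 (rev ys @ z # L) (a # R)) B (cfg0 q L (z # map g ys @ a' # R))"
proof (cases ys rule: rev_cases)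
  case Nil
  then show ?thesis using r0_stepL[where \<delta>=\<delta>, OF assms(1,3)] assms(5) by simp
next
  case (snoc ys0 y)
  have 1: "reach (Q, S, \<delta>) (cfg0 q0 (rev ys @ z # L) (a # R)) 1 (cfg0 q (rev ys0 @ z # L) (y # a' # R))"
    using r0_stepL[where \<delta>=\<delta> and B=1 and b=y and L="rev ys0 @ z # L" and R=R, OF assms(1,3)] snoc by simp
  have 2: "reach (Q, S, \<delta>) (cfg0 q (rev ys0 @ z # L) (y # a' # R)) (length ys) (cfg0 q L (z # map g ys0 @ g y # a' # R))"
    using r0_walkL[where \<delta>=\<delta> and g=g and y=y and ys=ys0 and B="length ys" and z=z and L=L and R="a' # R", OF assms(2)] assms(4) snoc by simp
  show ?thesis using reach_trans[OF 1 2] assms(5) snoc by (auto intro: reach_mono)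
qed

lemma r0_walkR':
  assumes "q0 \<noteq> 1" "q \<noteq> 1" "\<delta> q0 a = (q, a', Right)" "\<forall>s\<in>set xs. \<delta> q s = (q, g s, Right)"
    "Suc (length xs) \<le> B"
  shows "reach (Q, S, \<delta>) (cfg0 q0 L (a # xs @ R)) B (cfg0 q (rev (map g xs) @ a' # L) R)"
proof -
  have 1: "reach (Q, S, \<delta>) (cfg0 q0 L (a # xs @ R)) 1 (cfg0 q (a' # L) (xs @ R))"
    using r0_stepR[where \<delta>=\<delta>, OF assms(1,3)] by simp
  have 2: "reach (Q, S, \<delta>) (cfg0 q (a' # L) (xs @ R)) (length xs) (cfg0 q (rev (map g xs) @ a' # L) R)"
    using r0_walkR[where \<delta>=\<delta>, OF assms(2,4)] by simp
  show ?thesis using reach_trans[OF 1 2] assms(5) by (auto intro: reach_mono)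
qed


locale cotm =
  fixes QM SM :: nat and dM :: "nat \<Rightarrow> nat \<Rightarrow> nat \<times> nat \<times> move"
  assumes wfM: "tm_wf (QM, SM, dM)"
begin

abbreviation "sU \<equiv> SM"
abbreviation "sUp \<equiv> SM + 1"
abbreviation "sDn \<equiv> SM + 2"
abbreviation "sHs \<equiv> SM + 3"
abbreviation "sK1 \<equiv> SM + 4"
abbreviation "sK2 \<equiv> SM + 5"
abbreviation "sc1 \<equiv> SM + 6"
abbreviation "sc2 \<equiv> SM + 7"
abbreviation "sE \<equiv> SM + 8"

lemma SM3: "3 \<le> SM" and QM2: "2 \<le> QM"
  using wfM by (auto simp: tm_wf_def)

definition hm :: "nat \<Rightarrow> nat" where "hm q = (if q = 1 then 1 else 42 + q)"

definition prog :: "nat \<Rightarrow> nat \<Rightarrow> nat \<times> nat \<times> move" where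
  "prog q s = (
     if q = 0 then (if s = 2 then (2, 2, Right) else if s = 1 then (3, 1, Right) else (q, s, Stay))
     else if q = 2 then (if s = 2 then (0, 2, Right) else (q, s, Stay))
     else if q = 3 then (if s = 1 then (4, sE, Right) else (q, s, Stay))
     else if q = 4 then (if s = 2 then (5, sU, Right) else if s = 1 then (6, sDn, Right) else (q, s, Stay))
     else if q = 5 then (if s = 2 then (4, sDn, Right) else (q, s, Stay))
     else if q = 6 then (if s = 1 then (7, sDn, Right) else (q, s, Stay))
     else if q = 7 then (if s = 1 \<or> s = 2 then (7, s, Right) else if s = 0 then (8, sHs, Left) else (q, s, Stay))
     else if q = 8 then (if s = 1 \<or> s = 2 then (8, s, Left) else if s = sDn then (9, sDn, Right) else (q, s, Stay))
     else if q = 9 then (if s = 2 then (10, 2, Right) else if s = 1 then (11, sK1, Left)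
                         else if s = sHs then (36, sHs, Right) else (q, s, Stay))
     else if q = 10 then (if s = 1 \<or> s = 2 then (9, s, Right) else (q, s, Stay))
     else if q = 11 then (if s = 1 \<or> s = 2 \<or> s = sDn \<or> s = sUp then (11, s, Left)
                          else if s = sU then (12, sUp, Right) else if s = sE then (32, sE, Right) else (q, s, Stay))
     else if q = 12 then (if s = 1 \<or> s = 2 \<or> s = sDn \<or> s = sUp then (12, s, Right)
                          else if s = sK1 then (13, 1, Left) else if s = sK2 then (13, 2, Left) else (q, s, Stay))
     else if q = 13 then (if s = 1 \<or> s = 2 then (14, s, Left) else (q, s, Stay))
     else if q = 14 then (if s = 2 then (15, sK2, Left) else (q, s, Stay))
     else if q = 15 then (if s = 1 \<or> s = 2 \<or> s = sHs \<or> s = sK2 then (15, s, Left)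
                          else if s = sc1 \<or> s = sc2 \<or> s = sDn then (16, s, Right) else (q, s, Stay))
     else if q = 16 then (if s = 1 then (17, sc1, Right) else if s = 2 then (18, sc2, Right)
                          else if s = sK2 then (19, sK2, Right) else (q, s, Stay))
     else if q = 17 \<or> q = 18 then (if s = 1 \<or> s = 2 \<or> s = sK2 \<or> s = sHs then (q, s, Right)
                          else if s = 0 then (15, q - 16, Left) else (q, s, Stay))
     else if q = 19 then (if s = 1 \<or> s = 2 then (16 + 4 * s, s, Right) else (q, s, Stay))
     else if q = 20 \<or> q = 24 then (if s = 1 \<or> s = 2 \<or> s = sHs then (q, s, Right)
                          else if s = 0 then (q + 1, 1, Right) else (q, s, Stay))
     else if q = 21 \<or> q = 25 then (if s = 0 then (q + 1, 1, Right) else (q, s, Stay))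
     else if q = 22 \<or> q = 26 then (if s = 0 then (q + 1, 2, Right) else (q, s, Stay))
     else if q = 23 \<or> q = 27 then (if s = 0 then (28, (q - 19) div 4, Right) else (q, s, Stay))
     else if q = 28 then (if s = 0 then (29, 1, Right) else (q, s, Stay))
     else if q = 29 then (if s = 0 then (30, 1, Left) else (q, s, Stay))
     else if q = 30 then (if s = 1 \<or> s = 2 \<or> s = sHs then (30, s, Left)
                          else if s = sK2 then (31, sK2, Left) else (q, s, Stay))
     else if q = 31 then (if s = sc1 then (31, 1, Left) else if s = sc2 then (31, 2, Left)
                          else if s = sDn then (11, sDn, Left) else (q, s, Stay))
     else if q = 32 then (if s = sUp \<or> s = sU then (32, sU, Right) else if s = sDn then (32, sDn, Right)
                          else if s = 1 \<or> s = 2 \<or> s = sK1 \<or> s = sK2 then (33, s, Stay) else (q, s, Stay))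
     else if q = 33 then (if s = 2 \<or> s = sK2 then (34, sDn, Right) else if s = 1 \<or> s = sK1 then (35, sDn, Right)
                          else (q, s, Stay))
     else if q = 34 then (if s = 1 \<or> s = 2 then (33, sDn, Right) else (q, s, Stay))
     else if q = 35 then (if s = 1 then (9, sDn, Right) else (q, s, Stay))
     else if q = 36 then (if s = 1 \<or> s = 2 \<or> s = sU \<or> s = sDn \<or> s = sHs then (36, s, Right)
                          else if s = 0 then (37, 0, Left) else (q, s, Stay))
     else if q = 37 \<or> q = 38 \<or> q = 39 then (if s = 1 \<or> s = 2 then (37 + s, q - 37, Left)
                          else if s = sU \<or> s = sDn \<or> s = sHs then (40, q - 37, Left) else (q, s, Stay))
     else if q = 40 then (if s = sU \<or> s = sDn \<or> s = sHs then (36, s, Right)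
                          else if s = sE then (41, 1, Left) else (q, s, Stay))
     else if q = 41 then (if s = 1 \<or> s = 2 then (41, s, Left) else if s = 0 then (42, 0, Right) else (q, s, Stay))
     else (q, s, Stay))"

definition dA :: "nat \<Rightarrow> nat \<Rightarrow> nat \<times> nat \<times> move" where
  "dA q s = (if q < 42 then (case prog q s of (q', s', mv) \<Rightarrow>
                if q' \<le> 42 \<and> s' < SM + 9 then (q', s', mv) else (q, s, Stay))
             else if q - 42 < QM \<and> s < SM then (case dM (q - 42) s of (q', s', mv) \<Rightarrow> (hm q', s', mv))
             else (q, s, Stay))"

definition A :: tm where "A = (42 + QM, SM + 9, dA)"

lemma A_wf: "tm_wf A"
proof -
  have "\<forall>q<42 + QM. \<forall>s<SM + 9. case dA q s of (q', s', _) \<Rightarrow> q' < 42 + QM \<and> s' < SM + 9"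
  proof (intro allI impI)
    fix q s assume q: "q < 42 + QM" and s: "s < SM + 9"
    show "case dA q s of (q', s', _) \<Rightarrow> q' < 42 + QM \<and> s' < SM + 9"
    proof (cases "q < 42")
      case True
      then show ?thesis using q s QM2
        by (cases "prog q s") (auto simp: dA_def)
    next
      case False
      show ?thesis
      proof (cases "q - 42 < QM \<and> s < SM")
        case True
        obtain q' s' mv where e: "dM (q - 42) s = (q', s', mv)" by (cases "dM (q - 42) s")
        have "q' < QM" "s' < SM" 
        proof -
          have "\<forall>q<QM. \<forall>s<SM. case dM q s of (q', s', _) \<Rightarrow> q' < QM \<and> s' < SM"
            using wfM unfolding tm_wf_def by simp
          then show "q' < QM" "s' < SM" using True e by fastforce+
        qed
        then show ?thesis using False True e q by (auto simp: dA_def hm_def)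
      next
        case F2: False
        then show ?thesis using False q s by (auto simp: dA_def)
      qed
    qed
  qed
  then show ?thesis unfolding A_def tm_wf_def using QM2 SM3 by auto
qed


definition cm :: "nat \<Rightarrow> nat" where "cm x = (if x = 1 then sc1 else sc2)"
definition uncm :: "nat \<Rightarrow> nat" where "uncm x = (if x = sc1 then 1 else 2)"

lemma uncm_cm[simp]: "x \<in> {1,2} \<Longrightarrow> uncm (cm x) = x"
  using SM3 by (auto simp: cm_def uncm_def)


lemma t0_2: "dA 0 2 = (2, 2, Right)" using SM3 by (auto simp: dA_def prog_def cm_def)
lemma t0_1: "dA 0 1 = (3, 1, Right)" using SM3 by (auto simp: dA_def prog_def cm_def)
lemma t2_2: "dA 2 2 = (0, 2, Right)" using SM3 by (auto simp: dA_def prog_def cm_def)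
lemma t3_1: "dA 3 1 = (4, sE, Right)" using SM3 by (auto simp: dA_def prog_def cm_def)
lemma t4_2: "dA 4 2 = (5, sU, Right)" using SM3 by (auto simp: dA_def prog_def cm_def)
lemma t4_1: "dA 4 1 = (6, sDn, Right)" using SM3 by (auto simp: dA_def prog_def cm_def)
lemma t5_2: "dA 5 2 = (4, sDn, Right)" using SM3 by (auto simp: dA_def prog_def cm_def)
lemma t6_1: "dA 6 1 = (7, sDn, Right)" using SM3 by (auto simp: dA_def prog_def cm_def)
lemma t7_b: "s \<in> {1,2} \<Longrightarrow> dA 7 s = (7, s, Right)" using SM3 by (auto simp: dA_def prog_def cm_def)
lemma t7_0: "dA 7 0 = (8, sHs, Left)" using SM3 by (auto simp: dA_def prog_def cm_def)
lemma t8_b: "s \<in> {1,2} \<Longrightarrow> dA 8 s = (8, s, Left)" using SM3 by (auto simp: dA_def prog_def cm_def)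
lemma t8_Dn: "dA 8 sDn = (9, sDn, Right)" using SM3 by (auto simp: dA_def prog_def cm_def)
lemma t9_2: "dA 9 2 = (10, 2, Right)" using SM3 by (auto simp: dA_def prog_def cm_def)
lemma t9_1: "dA 9 1 = (11, sK1, Left)" using SM3 by (auto simp: dA_def prog_def cm_def)
lemma t9_Hs: "dA 9 sHs = (36, sHs, Right)" using SM3 by (auto simp: dA_def prog_def cm_def)
lemma t10_b: "s \<in> {1,2} \<Longrightarrow> dA 10 s = (9, s, Right)" using SM3 by (auto simp: dA_def prog_def cm_def)
lemma t11_skip: "s \<in> {1,2,sDn,sUp} \<Longrightarrow> dA 11 s = (11, s, Left)" using SM3 by (auto simp: dA_def prog_def cm_def)
lemma t11_U: "dA 11 sU = (12, sUp, Right)" using SM3 by (auto simp: dA_def prog_def cm_def)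
lemma t11_E: "dA 11 sE = (32, sE, Right)" using SM3 by (auto simp: dA_def prog_def cm_def)
lemma t12_skip: "s \<in> {1,2,sDn,sUp} \<Longrightarrow> dA 12 s = (12, s, Right)" using SM3 by (auto simp: dA_def prog_def cm_def)
lemma t12_K1: "dA 12 sK1 = (13, 1, Left)" using SM3 by (auto simp: dA_def prog_def cm_def)
lemma t12_K2: "dA 12 sK2 = (13, 2, Left)" using SM3 by (auto simp: dA_def prog_def cm_def)
lemma t13: "s \<in> {1,2} \<Longrightarrow> dA 13 s = (14, s, Left)" using SM3 by (auto simp: dA_def prog_def cm_def)
lemma t14: "dA 14 2 = (15, sK2, Left)" using SM3 by (auto simp: dA_def prog_def cm_def)
lemma t15_skip: "s \<in> {1,2,sHs,sK2} \<Longrightarrow> dA 15 s = (15, s, Left)" using SM3 by (auto simp: dA_def prog_def cm_def)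
lemma t15_stop: "s \<in> {sc1,sc2,sDn} \<Longrightarrow> dA 15 s = (16, s, Right)" using SM3 by (auto simp: dA_def prog_def cm_def)
lemma t16_b: "x \<in> {1,2} \<Longrightarrow> dA 16 x = (16 + x, cm x, Right)" using SM3 by (auto simp: dA_def prog_def cm_def)
lemma t16_K2: "dA 16 sK2 = (19, sK2, Right)" using SM3 by (auto simp: dA_def prog_def cm_def)
lemma t17_skip: "x \<in> {1,2} \<Longrightarrow> s \<in> {1,2,sK2,sHs} \<Longrightarrow> dA (16 + x) s = (16 + x, s, Right)" using SM3 by (auto simp: dA_def prog_def cm_def)
lemma t17_0: "x \<in> {1,2} \<Longrightarrow> dA (16 + x) 0 = (15, x, Left)" using SM3 by (auto simp: dA_def prog_def cm_def)
lemma t15_cm: "x \<in> {1,2} \<Longrightarrow> dA 15 (cm x) = (16, cm x, Right)" using SM3 by (auto simp: dA_def prog_def cm_def)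
lemma t19: "b \<in> {1,2} \<Longrightarrow> dA 19 b = (16 + 4 * b, b, Right)" using SM3 by (auto simp: dA_def prog_def cm_def)
lemma ta0_skip: "b \<in> {1,2} \<Longrightarrow> s \<in> {1,2,sHs} \<Longrightarrow> dA (16 + 4 * b) s = (16 + 4 * b, s, Right)" using SM3 by (auto simp: dA_def prog_def cm_def)
lemma ta0_0: "b \<in> {1,2} \<Longrightarrow> dA (16 + 4 * b) 0 = (17 + 4 * b, 1, Right)" using SM3 by (auto simp: dA_def prog_def cm_def)
lemma ta1: "b \<in> {1,2} \<Longrightarrow> dA (17 + 4 * b) 0 = (18 + 4 * b, 1, Right)" using SM3 by (auto simp: dA_def prog_def cm_def)
lemma ta2: "b \<in> {1,2} \<Longrightarrow> dA (18 + 4 * b) 0 = (19 + 4 * b, 2, Right)" using SM3 by (auto simp: dA_def prog_def cm_def)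
lemma ta3: "b \<in> {1,2} \<Longrightarrow> dA (19 + 4 * b) 0 = (28, b, Right)" using SM3 by (auto simp: dA_def prog_def cm_def)
lemma t28: "dA 28 0 = (29, 1, Right)" using SM3 by (auto simp: dA_def prog_def cm_def)
lemma t29: "dA 29 0 = (30, 1, Left)" using SM3 by (auto simp: dA_def prog_def cm_def)
lemma t30_skip: "s \<in> {1,2,sHs} \<Longrightarrow> dA 30 s = (30, s, Left)" using SM3 by (auto simp: dA_def prog_def cm_def)
lemma t30_K2: "dA 30 sK2 = (31, sK2, Left)" using SM3 by (auto simp: dA_def prog_def cm_def)
lemma t31_c: "x \<in> {1,2} \<Longrightarrow> dA 31 (cm x) = (31, x, Left)" using SM3 by (auto simp: dA_def prog_def cm_def)
lemma t31_Dn: "dA 31 sDn = (11, sDn, Left)" using SM3 by (auto simp: dA_def prog_def cm_def)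
lemma t32_Up: "dA 32 sUp = (32, sU, Right)" using SM3 by (auto simp: dA_def prog_def cm_def)
lemma t32_U: "dA 32 sU = (32, sU, Right)" using SM3 by (auto simp: dA_def prog_def cm_def)
lemma t32_Dn: "dA 32 sDn = (32, sDn, Right)" using SM3 by (auto simp: dA_def prog_def cm_def)
lemma t32_stop: "s \<in> {1,2,sK1,sK2} \<Longrightarrow> dA 32 s = (33, s, Stay)" using SM3 by (auto simp: dA_def prog_def cm_def)
lemma t33_2: "s \<in> {2,sK2} \<Longrightarrow> dA 33 s = (34, sDn, Right)" using SM3 by (auto simp: dA_def prog_def cm_def)
lemma t33_1: "s \<in> {1,sK1} \<Longrightarrow> dA 33 s = (35, sDn, Right)" using SM3 by (auto simp: dA_def prog_def cm_def)
lemma t34: "s \<in> {1,2} \<Longrightarrow> dA 34 s = (33, sDn, Right)" using SM3 by (auto simp: dA_def prog_def cm_def)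
lemma t35: "dA 35 1 = (9, sDn, Right)" using SM3 by (auto simp: dA_def prog_def cm_def)
lemma t36_skip: "s \<in> {1,2,sU,sDn,sHs} \<Longrightarrow> dA 36 s = (36, s, Right)" using SM3 by (auto simp: dA_def prog_def cm_def)
lemma t36_0: "dA 36 0 = (37, 0, Left)" using SM3 by (auto simp: dA_def prog_def cm_def)
lemma t37_b: "x \<le> 2 \<Longrightarrow> s \<in> {1,2} \<Longrightarrow> dA (37 + x) s = (37 + s, x, Left)" using SM3 by (auto simp: dA_def prog_def cm_def)
lemma t37_g: "x \<le> 2 \<Longrightarrow> s \<in> {sU,sDn,sHs} \<Longrightarrow> dA (37 + x) s = (40, x, Left)" using SM3 by (auto simp: dA_def prog_def cm_def)
lemma t40_g: "s \<in> {sU,sDn,sHs} \<Longrightarrow> dA 40 s = (36, s, Right)" using SM3 by (auto simp: dA_def prog_def cm_def)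
lemma t40_E: "dA 40 sE = (41, 1, Left)" using SM3 by (auto simp: dA_def prog_def cm_def)
lemma t41_b: "s \<in> {1,2} \<Longrightarrow> dA 41 s = (41, s, Left)" using SM3 by (auto simp: dA_def prog_def cm_def)
lemma t41_0: "dA 41 0 = (42, 0, Right)" using SM3 by (auto simp: dA_def prog_def cm_def)

end

declare One_nat_def[simp del]


context cotm begin

lemma reach_conv: "reach X c B c' \<Longrightarrow> c = c2 \<Longrightarrow> c' = c2' \<Longrightarrow> B \<le> B2 \<Longrightarrow> reach X c2 B2 c2'"
  using reach_mono by blast

abbreviation "AA \<equiv> (42 + QM, SM + 9, dA)"

definition bs :: "bool \<Rightarrow> nat" where "bs b = sym_of_bit b"
definition pr :: "bool \<Rightarrow> nat list" where "pr b = [2, bs b]"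
definition body :: "bool list \<Rightarrow> nat list" where "body xs = concat (map pr xs)"
definition es :: "bool list \<Rightarrow> nat list" where "es xs = body xs @ [1, 1]"

lemma bs_in[simp]: "bs b \<in> {1,2}" "bs b \<noteq> 0"
  by (auto simp: bs_def sym_of_bit_def)

lemma bs_eq1[simp]: "bs b = 1 \<longleftrightarrow> \<not> b" and bs_eq2[simp]: "bs b = 2 \<longleftrightarrow> b"
  by (auto simp: bs_def sym_of_bit_def)

lemma bs_neq[simp]: "bs b \<noteq> SM + k" "SM + k \<noteq> bs b"
  using SM3 by (auto simp: bs_def sym_of_bit_def)

lemma body_Nil[simp]: "body [] = []" and body_Cons[simp]: "body (x # xs) = 2 # bs x # body xs"
  and body_append[simp]: "body (xs @ ys) = body xs @ body ys"
  by (auto simp: body_def pr_def)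

lemma length_body[simp]: "length (body xs) = 2 * length xs"
  by (induction xs) auto

lemma set_body: "set (body xs) \<subseteq> {1,2}"
  by (induction xs) auto

lemma set_body'[simp]: "x \<in> set (body xs) \<Longrightarrow> x = 1 \<or> x = 2"
  using set_body by blast

lemma map_sym_enc_str: "map sym_of_bit (enc_str xs) = es xs"
  by (induction xs) (auto simp: enc_str_def es_def bs_def sym_of_bit_def)


lemma a_stepR: "q \<noteq> 1 \<Longrightarrow> dA q a = (q', s', Right) \<Longrightarrow> 1 \<le> B \<Longrightarrow> reach AA (cfg0 q L (a # R)) B (cfg0 q' (s' # L) R)"
  by (rule r0_stepR)
lemma a_stepL: "q \<noteq> 1 \<Longrightarrow> dA q a = (q', s', Left) \<Longrightarrow> 1 \<le> B \<Longrightarrow> reach AA (cfg0 q (b # L) (a # R)) B (cfg0 q' L (b # s' # R))"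
  by (rule r0_stepL)
lemma a_stepS: "q \<noteq> 1 \<Longrightarrow> dA q a = (q', s', Stay) \<Longrightarrow> 1 \<le> B \<Longrightarrow> reach AA (cfg0 q L (a # R)) B (cfg0 q' L (s' # R))"
  by (rule r0_stepS)
lemma a_walkR: "q \<noteq> 1 \<Longrightarrow> \<forall>s\<in>set xs. dA q s = (q, g s, Right) \<Longrightarrow> length xs \<le> B \<Longrightarrow>
   reach AA (cfg0 q L (xs @ R)) B (cfg0 q (rev (map g xs) @ L) R)"
  by (rule r0_walkR)
lemma a_walkL: "q \<noteq> 1 \<Longrightarrow> \<forall>s\<in>set (y # ys). dA q s = (q, g s, Left) \<Longrightarrow> Suc (length ys) \<le> B \<Longrightarrow>
   reach AA (cfg0 q (rev ys @ z # L) (y # R)) B (cfg0 q L (z # map g ys @ g y # R))"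
  by (rule r0_walkL)
lemma a_walkL': "q0 \<noteq> 1 \<Longrightarrow> q \<noteq> 1 \<Longrightarrow> dA q0 a = (q, a', Left) \<Longrightarrow> \<forall>s\<in>set ys. dA q s = (q, g s, Left) \<Longrightarrow>
   Suc (length ys) \<le> B \<Longrightarrow> reach AA (cfg0 q0 (rev ys @ z # L) (a # R)) B (cfg0 q L (z # map g ys @ a' # R))"
  by (rule r0_walkL')
lemma a_walkR': "q0 \<noteq> 1 \<Longrightarrow> q \<noteq> 1 \<Longrightarrow> dA q0 a = (q, a', Right) \<Longrightarrow> \<forall>s\<in>set xs. dA q s = (q, g s, Right) \<Longrightarrow>
   Suc (length xs) \<le> B \<Longrightarrow> reach AA (cfg0 q0 L (a # xs @ R)) B (cfg0 q (rev (map g xs) @ a' # L) R)"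
  by (rule r0_walkR')

lemma a_walkRi: "q \<noteq> 1 \<Longrightarrow> \<forall>s\<in>set xs. dA q s = (q, s, Right) \<Longrightarrow> length xs \<le> B \<Longrightarrow>
   reach AA (cfg0 q L (xs @ R)) B (cfg0 q (rev xs @ L) R)"
  using a_walkR[of q xs id B L R] by simp
lemma a_walkLi: "q \<noteq> 1 \<Longrightarrow> \<forall>s\<in>set (y # ys). dA q s = (q, s, Left) \<Longrightarrow> Suc (length ys) \<le> B \<Longrightarrow>
   reach AA (cfg0 q (rev ys @ z # L) (y # R)) B (cfg0 q L (z # ys @ y # R))"
  using a_walkL[of q y ys id B z L R] by simp
lemma a_walkL'i: "q0 \<noteq> 1 \<Longrightarrow> q \<noteq> 1 \<Longrightarrow> dA q0 a = (q, a', Left) \<Longrightarrow> \<forall>s\<in>set ys. dA q s = (q, s, Left) \<Longrightarrow>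
   Suc (length ys) \<le> B \<Longrightarrow> reach AA (cfg0 q0 (rev ys @ z # L) (a # R)) B (cfg0 q L (z # ys @ a' # R))"
  using a_walkL'[of q0 q a a' ys id B z L R] by simp
lemma a_walkR'i: "q0 \<noteq> 1 \<Longrightarrow> q \<noteq> 1 \<Longrightarrow> dA q0 a = (q, a', Right) \<Longrightarrow> \<forall>s\<in>set xs. dA q s = (q, s, Right) \<Longrightarrow>
   Suc (length xs) \<le> B \<Longrightarrow> reach AA (cfg0 q0 L (a # xs @ R)) B (cfg0 q (rev xs @ a' # L) R)"
  using a_walkR'[of q0 q a a' xs id B L R] by simp

lemma phD: "reach AA (cfg0 0 L (concat (replicate d [2,2]) @ 1 # 1 # R)) (2 * d + 2)
   (cfg0 4 (sE # 1 # rev (concat (replicate d [2,2])) @ L) R)"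
proof (induction d arbitrary: L)
  case 0
  have "reach AA (cfg0 0 L (1 # 1 # R)) 1 (cfg0 3 (1 # L) (1 # R))"
    by (rule a_stepR[OF _ t0_1]) simp_all
  moreover have "reach AA (cfg0 3 (1 # L) (1 # R)) 1 (cfg0 4 (sE # 1 # L) R)"
    by (rule a_stepR[OF _ t3_1]) simp_all
  ultimately have "reach AA (cfg0 0 L (1 # 1 # R)) (1 + 1) (cfg0 4 (sE # 1 # L) R)" by (rule reach_trans)
  then show ?case by (rule reach_conv) simp_all
next
  case (Suc d)
  have "reach AA (cfg0 0 L (2 # 2 # concat (replicate d [2,2]) @ 1 # 1 # R)) 1 (cfg0 2 (2 # L) (2 # concat (replicate d [2,2]) @ 1 # 1 # R))"
    by (rule a_stepR[OF _ t0_2]) simp_all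
  moreover have "reach AA (cfg0 2 (2 # L) (2 # concat (replicate d [2,2]) @ 1 # 1 # R)) 1 (cfg0 0 (2 # 2 # L) (concat (replicate d [2,2]) @ 1 # 1 # R))"
    by (rule a_stepR[OF _ t2_2]) simp_all
  moreover note Suc[of "2 # 2 # L"]
  ultimately have "reach AA (cfg0 0 L (2 # 2 # concat (replicate d [2,2]) @ 1 # 1 # R)) (1 + 1 + (2 * d + 2))
     (cfg0 4 (sE # 1 # rev (concat (replicate d [2, 2])) @ 2 # 2 # L) R)"
    using reach_trans by blast
  then show ?case by (rule reach_conv) simp_all
qed


lemma reach_trans'[trans]: "reach X a B1 b \<Longrightarrow> reach X b B2 c \<Longrightarrow> reach X a (B1 + B2) c"
  by (rule reach_trans)

lemma phC: "reach AA (cfg0 4 L (concat (replicate T [2,2]) @ 1 # 1 # R)) (2 * T + 2)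
   (cfg0 7 (sDn # sDn # rev (concat (replicate T [sU, sDn])) @ L) R)"
proof (induction T arbitrary: L)
  case 0
  have "reach AA (cfg0 4 L (1 # 1 # R)) 1 (cfg0 6 (sDn # L) (1 # R))"
    by (rule a_stepR[OF _ t4_1]) simp_all
  also have "reach AA (cfg0 6 (sDn # L) (1 # R)) 1 (cfg0 7 (sDn # sDn # L) R)"
    by (rule a_stepR[OF _ t6_1]) simp_all
  finally show ?case by (rule reach_conv) simp_all
next
  case (Suc T)
  have "reach AA (cfg0 4 L (2 # 2 # concat (replicate T [2,2]) @ 1 # 1 # R)) 1 (cfg0 5 (sU # L) (2 # concat (replicate T [2,2]) @ 1 # 1 # R))"
    by (rule a_stepR[OF _ t4_2]) simp_all
  also have "reach AA (cfg0 5 (sU # L) (2 # concat (replicate T [2,2]) @ 1 # 1 # R)) 1 (cfg0 4 (sDn # sU # L) (concat (replicate T [2,2]) @ 1 # 1 # R))"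
    by (rule a_stepR[OF _ t5_2]) simp_all
  also note Suc[of "sDn # sU # L"]
  finally show ?case by (rule reach_conv) simp_all
qed

lemma phE: assumes "set Ss \<subseteq> {1,2}"
  shows "reach AA (cfg0 7 (sDn # L) Ss) (2 * length Ss + 3) (cfg0 9 (sDn # L) (Ss @ [sHs]))"
proof -
  have "reach AA (cfg0 7 (sDn # L) (Ss @ [])) (length Ss) (cfg0 7 (rev Ss @ sDn # L) [])"
    by (rule a_walkRi) (use assms in \<open>auto intro: t7_b\<close>)
  also have "cfg0 7 (rev Ss @ sDn # L) [] = cfg0 7 (rev Ss @ sDn # L) [0]"
    by (simp add: cfg0_R_Nil)
  also have "reach AA (cfg0 7 (rev Ss @ sDn # L) [0]) (Suc (length Ss)) (cfg0 8 L (sDn # Ss @ sHs # []))"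
    by (rule a_walkL'i[OF _ _ t7_0]) (use assms in \<open>auto intro: t8_b\<close>)
  also have "reach AA (cfg0 8 L (sDn # Ss @ sHs # [])) 1 (cfg0 9 (sDn # L) (Ss @ [sHs]))"
    by (rule a_stepR[OF _ t8_Dn]) simp_all
  finally show ?thesis by (rule reach_conv) simp_all
qed

lemma phP: "reach AA (cfg0 9 L (body xs @ 1 # R)) (2 * length xs) (cfg0 9 (rev (body xs) @ L) (1 # R))"
proof (induction xs arbitrary: L)
  case Nil then show ?case by (simp add: reach_refl)
next
  case (Cons x xs)
  have "reach AA (cfg0 9 L (2 # bs x # body xs @ 1 # R)) 1 (cfg0 10 (2 # L) (bs x # body xs @ 1 # R))"
    by (rule a_stepR[OF _ t9_2]) simp_all
  also have "reach AA (cfg0 10 (2 # L) (bs x # body xs @ 1 # R)) 1 (cfg0 9 (bs x # 2 # L) (body xs @ 1 # R))"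
    by (rule a_stepR[OF _ t10_b]) simp_all
  also note Cons[of "bs x # 2 # L"]
  finally show ?case by (rule reach_conv) simp_all
qed

end

context cotm begin

definition DL :: "nat \<Rightarrow> nat list" where "DL d = concat (replicate d [2,2]) @ [1]"

definition cur :: "bool list \<Rightarrow> nat \<Rightarrow> nat list" where
  "cur s k = (if k < length s then body (take k s) @ sK2 # bs (s ! k) # body (drop (Suc k) s) @ [1, 1]
              else body s @ [sK1, 1])"

definition emitP :: "bool list \<Rightarrow> nat \<Rightarrow> nat list" where
  "emitP s k = es (take k s) @ es [s ! k]"

lemma body_take_Suc: "k < length s \<Longrightarrow> body (take (Suc k) s) = body (take k s) @ [2, bs (s ! k)]"
  by (simp add: take_Suc_conv_app_nth)

lemma body_drop_nth: "k < length s \<Longrightarrow> body (drop k s) = 2 # bs (s ! k) # body (drop (Suc k) s)"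
  by (simp add: Cons_nth_drop_Suc[symmetric])

lemma phK: assumes k: "k < length s"
  shows "reach AA (cfg0 12 L (cur s (Suc k) @ R)) (2 * k + 3)
    (cfg0 13 (2 # rev (body (take k s)) @ L) (bs (s ! k) # body (drop (Suc k) s) @ 1 # 1 # R))"
proof -
  define Kp where "Kp = (if Suc k < length s then sK2 # bs (s ! Suc k) # body (drop (Suc (Suc k)) s) @ [1, 1] else [sK1, 1])"
  have cur: "cur s (Suc k) = body (take k s) @ [2, bs (s ! k)] @ Kp"
  proof (cases "Suc k < length s")
    case False
    then have "take (Suc k) s = s" using k by simp
    then show ?thesis using k False body_take_Suc[OF k] by (auto simp: cur_def Kp_def)
  qed (use k in \<open>auto simp: cur_def Kp_def body_take_Suc\<close>)
  have "reach AA (cfg0 12 L ((body (take k s) @ [2, bs (s ! k)]) @ Kp @ R)) (2 * k + 2)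
     (cfg0 12 (rev (body (take k s) @ [2, bs (s ! k)]) @ L) (Kp @ R))"
    by (rule a_walkRi) (use k set_body in \<open>auto intro!: t12_skip\<close>)
  moreover have "reach AA (cfg0 12 (rev (body (take k s) @ [2, bs (s ! k)]) @ L) (Kp @ R)) 1
    (cfg0 13 (2 # rev (body (take k s)) @ L) (bs (s ! k) # body (drop (Suc k) s) @ 1 # 1 # R))"
  proof (cases "Suc k < length s")
    case True
    then show ?thesis unfolding Kp_def
      by (simp add: body_drop_nth) (rule a_stepL[OF _ t12_K2], simp_all)
  next
    case False
    then have "drop (Suc k) s = []" by simp
    then show ?thesis using False unfolding Kp_def
      by simp (rule a_stepL[OF _ t12_K1], simp_all)
  qed
  ultimately show ?thesis using cur by (auto dest: reach_trans intro: reach_conv)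
qed


lemma phCopy1:
  assumes bk: "set bk \<subseteq> {1,2}" and W: "set W \<subseteq> {1,2,sK2,sHs}" and i: "i < length bk"
  shows "reach AA (cfg0 16 (rev (P @ map cm (take i bk))) (drop i bk @ W @ take i bk))
     (2 * (length bk + length W) + 4)
     (cfg0 16 (rev (P @ map cm (take (Suc i) bk))) (drop (Suc i) bk @ W @ take (Suc i) bk))"
proof -
  define x where "x = bk ! i"
  define xs where "xs = drop (Suc i) bk @ W @ take i bk"
  have x: "x \<in> {1,2}" using bk i unfolding x_def by (auto dest: nth_mem)
  have xs: "set xs \<subseteq> {1,2,sK2,sHs}" using bk W unfolding xs_def
    by (auto dest: in_set_dropD in_set_takeD)
  have lxs: "length xs < length bk + length W" using i unfolding xs_def by simp
  have d: "drop i bk @ W @ take i bk = x # xs" unfolding x_def xs_def using i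
    by (simp add: Cons_nth_drop_Suc)
  have "reach AA (cfg0 16 (rev (P @ map cm (take i bk))) (x # xs)) 1
      (cfg0 (16 + x) (cm x # rev (P @ map cm (take i bk))) xs)"
    using a_stepR[OF _ t16_b[OF x], of 1 "rev (P @ map cm (take i bk))" xs] by simp
  also have "reach AA (cfg0 (16 + x) (cm x # rev (P @ map cm (take i bk))) xs) (length xs)
      (cfg0 (16 + x) (rev xs @ cm x # rev (P @ map cm (take i bk))) [])"
  proof -
    have "reach AA (cfg0 (16 + x) (cm x # rev (P @ map cm (take i bk))) (xs @ [])) (length xs)
      (cfg0 (16 + x) (rev xs @ cm x # rev (P @ map cm (take i bk))) [])"
      by (rule a_walkRi) (use xs x in \<open>auto intro!: t17_skip\<close>)
    then show ?thesis by simp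
  qed
  also have "cfg0 (16 + x) (rev xs @ cm x # rev (P @ map cm (take i bk))) [] =
     cfg0 (16 + x) (rev xs @ cm x # rev (P @ map cm (take i bk))) [0]" by (rule cfg0_R_Nil)
  also have "reach AA (cfg0 (16 + x) (rev xs @ cm x # rev (P @ map cm (take i bk))) [0]) (Suc (length xs))
      (cfg0 15 (rev (P @ map cm (take i bk))) (cm x # xs @ x # []))"
    by (rule a_walkL'i[OF _ _ t17_0[OF x]]) (use xs x in \<open>auto intro!: t15_skip\<close>)
  also have "reach AA (cfg0 15 (rev (P @ map cm (take i bk))) (cm x # xs @ x # [])) 1
      (cfg0 16 (cm x # rev (P @ map cm (take i bk))) (xs @ [x]))"
    by (rule a_stepR[OF _ t15_cm[OF x]]) simp_all
  finally have r: "reach AA (cfg0 16 (rev (P @ map cm (take i bk))) (x # xs)) (1 + length xs + Suc (length xs) + 1)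
      (cfg0 16 (cm x # rev (P @ map cm (take i bk))) (xs @ [x]))" .
  have e1: "cm x # rev (P @ map cm (take i bk)) = rev (P @ map cm (take (Suc i) bk))"
    using i by (simp add: take_Suc_conv_app_nth x_def)
  have e2: "xs @ [x] = drop (Suc i) bk @ W @ take (Suc i) bk"
    using i by (simp add: take_Suc_conv_app_nth x_def xs_def)
  show ?thesis using r unfolding d e1 e2 by (rule reach_conv) (use lxs in simp_all)
qed

lemma phCopy:
  assumes bk: "set bk \<subseteq> {1,2}" and W: "set W \<subseteq> {1,2,sK2,sHs}" and i: "i \<le> length bk"
  shows "reach AA (cfg0 16 (rev (P @ map cm (take i bk))) (drop i bk @ W @ take i bk))
     ((length bk - i) * (2 * (length bk + length W) + 4))
     (cfg0 16 (rev (P @ map cm bk)) (W @ bk))"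
  using i
proof (induction "length bk - i" arbitrary: i)
  case 0
  then have "i = length bk" by simp
  then show ?case by (simp add: reach_refl)
next
  case (Suc n)
  then have i: "i < length bk" by simp
  have "reach AA (cfg0 16 (rev (P @ map cm (take i bk))) (drop i bk @ W @ take i bk))
     (2 * (length bk + length W) + 4 + n * (2 * (length bk + length W) + 4))
     (cfg0 16 (rev (P @ map cm bk)) (W @ bk))"
  proof (rule reach_trans[OF phCopy1[OF bk W i]])
    have "n = length bk - Suc i" using Suc.hyps(2) by simp
    then show "reach AA (cfg0 16 (rev (P @ map cm (take (Suc i) bk))) (drop (Suc i) bk @ W @ take (Suc i) bk))
      (n * (2 * (length bk + length W) + 4)) (cfg0 16 (rev (P @ map cm bk)) (W @ bk))"
      using Suc.hyps(1)[of "Suc i"] i by simp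
  qed
  then show ?case by (rule reach_conv) (simp_all add: Suc(2)[symmetric])
qed


lemma map_uncm_cm: "set bk \<subseteq> {1,2} \<Longrightarrow> map uncm (map cm bk) = bk"
  by (induction bk) auto

lemma map_uncm_cm': "set bk \<subseteq> {1,2} \<Longrightarrow> map (uncm \<circ> cm) bk = bk"
  using map_uncm_cm by simp

lemma phApp:
  assumes bk: "set bk \<subseteq> {1,2}" and b: "b \<in> {1,2}" and Z: "set Z \<subseteq> {1,2,sHs}"
  shows "reach AA (cfg0 16 (rev (P0 @ sDn # map cm bk)) (sK2 # b # Z))
     (2 * length Z + length bk + 15)
     (cfg0 31 (rev P0) (sDn # bk @ sK2 # b # Z @ [1,1,2,b,1,1]))"
proof -
  let ?L = "rev (P0 @ sDn # map cm bk)"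
  have "reach AA (cfg0 16 ?L (sK2 # b # Z)) 1 (cfg0 19 (sK2 # ?L) (b # Z))"
    by (rule a_stepR[OF _ t16_K2]) simp_all
  also have "reach AA (cfg0 19 (sK2 # ?L) (b # Z)) 1 (cfg0 (16 + 4 * b) (b # sK2 # ?L) Z)"
    by (rule a_stepR[OF _ t19[OF b]]) (use b in auto)
  also have "reach AA (cfg0 (16 + 4 * b) (b # sK2 # ?L) Z) (length Z) (cfg0 (16 + 4 * b) (rev Z @ b # sK2 # ?L) [0])"
  proof -
    have "reach AA (cfg0 (16 + 4 * b) (b # sK2 # ?L) (Z @ [])) (length Z) (cfg0 (16 + 4 * b) (rev Z @ b # sK2 # ?L) [])"
      by (rule a_walkRi) (use b Z in \<open>auto intro!: ta0_skip\<close>)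
    then show ?thesis by (simp add: cfg0_R_Nil)
  qed
  also have "reach AA (cfg0 (16 + 4 * b) (rev Z @ b # sK2 # ?L) [0]) 1 (cfg0 (17 + 4 * b) (1 # rev Z @ b # sK2 # ?L) [0])"
    using a_stepR[OF _ ta0_0[OF b], of 1 "rev Z @ b # sK2 # ?L" "[]"] b by (auto simp: cfg0_R_Nil)
  also have "reach AA (cfg0 (17 + 4 * b) (1 # rev Z @ b # sK2 # ?L) [0]) 1 (cfg0 (18 + 4 * b) (1 # 1 # rev Z @ b # sK2 # ?L) [0])"
    using a_stepR[OF _ ta1[OF b], of 1 "1 # rev Z @ b # sK2 # ?L" "[]"] b by (auto simp: cfg0_R_Nil)
  also have "reach AA (cfg0 (18 + 4 * b) (1 # 1 # rev Z @ b # sK2 # ?L) [0]) 1 (cfg0 (19 + 4 * b) (2 # 1 # 1 # rev Z @ b # sK2 # ?L) [0])"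
    using a_stepR[OF _ ta2[OF b], of 1 "1 # 1 # rev Z @ b # sK2 # ?L" "[]"] b by (auto simp: cfg0_R_Nil)
  also have "reach AA (cfg0 (19 + 4 * b) (2 # 1 # 1 # rev Z @ b # sK2 # ?L) [0]) 1 (cfg0 28 (b # 2 # 1 # 1 # rev Z @ b # sK2 # ?L) [0])"
    using a_stepR[OF _ ta3[OF b], of 1 "2 # 1 # 1 # rev Z @ b # sK2 # ?L" "[]"] b by (auto simp: cfg0_R_Nil)
  also have "reach AA (cfg0 28 (b # 2 # 1 # 1 # rev Z @ b # sK2 # ?L) [0]) 1 (cfg0 29 (1 # b # 2 # 1 # 1 # rev Z @ b # sK2 # ?L) [0])"
    using a_stepR[OF _ t28, of 1 "b # 2 # 1 # 1 # rev Z @ b # sK2 # ?L" "[]"] by (auto simp: cfg0_R_Nil)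
  also have "cfg0 29 (1 # b # 2 # 1 # 1 # rev Z @ b # sK2 # ?L) [0] = cfg0 29 (rev (b # Z @ [1,1,2,b,1]) @ sK2 # ?L) [0]"
    by simp
  also have "reach AA (cfg0 29 (rev (b # Z @ [1,1,2,b,1]) @ sK2 # ?L) [0]) (Suc (length (b # Z @ [1,1,2,b,1])))
      (cfg0 30 ?L (sK2 # (b # Z @ [1,1,2,b,1]) @ 1 # []))"
    by (rule a_walkL'i[OF _ _ t29]) (use b Z in \<open>auto intro!: t30_skip\<close>)
  also have "?L = rev (map cm bk) @ sDn # rev P0" by simp
  also have "reach AA (cfg0 30 (rev (map cm bk) @ sDn # rev P0) (sK2 # (b # Z @ [1,1,2,b,1]) @ 1 # [])) (Suc (length (map cm bk)))
     (cfg0 31 (rev P0) (sDn # map uncm (map cm bk) @ sK2 # (b # Z @ [1,1,2,b,1]) @ 1 # []))"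
    by (rule a_walkL'[OF _ _ t30_K2]) (use bk in \<open>auto intro!: t31_c\<close>)
  finally show ?thesis by (rule reach_conv) (use bk in \<open>simp_all add: map_uncm_cm map_uncm_cm'\<close>)
qed


definition cntc :: "nat \<Rightarrow> nat \<Rightarrow> nat \<Rightarrow> nat \<Rightarrow> nat list \<Rightarrow> config" where
  "cntc d u j nD W = (case u of
      Suc u' \<Rightarrow> cfg0 11 (rev (DL d @ sE # concat (replicate u' [sU, sDn])))
                  (sU # sDn # concat (replicate j [sUp, sDn]) @ replicate (Suc (Suc nD)) sDn @ W)
    | 0 \<Rightarrow> cfg0 11 (rev (DL d)) (sE # concat (replicate j [sUp, sDn]) @ replicate (Suc (Suc nD)) sDn @ W))"

lemma replicate_app_Cons_same: "replicate n x @ x # xs = x # replicate n x @ xs"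
  by (induction n) auto

lemma concat_replicate_snoc: "concat (replicate (Suc n) xs) = concat (replicate n xs) @ xs"
  by (induction n) auto

lemma set_concat_replicate: "set (concat (replicate n xs)) \<subseteq> set xs"
  by (induction n) auto

lemma phIter:
  assumes k: "k < length s" and Rest: "set Rest \<subseteq> {1,2,sHs}"
    and N: "2 * (u + j) + nD + 2 * length s + length Rest + 4 * k + 8 \<le> N"
  shows "reach AA (cntc d (Suc u) j nD (cur s (Suc k) @ Rest)) (3 * (N + 5) * (N + 5))
     (cntc d u (Suc j) nD (cur s k @ Rest @ emitP s k))"
proof -
  define LL where "LL = rev (DL d @ sE # concat (replicate u [sU, sDn]))"
  define X0 where "X0 = sDn # concat (replicate j [sUp, sDn]) @ replicate (Suc (Suc nD)) sDn"
  define P0 where "P0 = DL d @ sE # concat (replicate u [sU, sDn]) @ sUp # sDn # concat (replicate j [sUp, sDn]) @ replicate (Suc nD) sDn"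
  define bk where "bk = body (take k s)"
  define b where "b = bs (s ! k)"
  define Y where "Y = body (drop (Suc k) s) @ 1 # 1 # Rest"
  have bkS: "set bk \<subseteq> {1,2}" unfolding bk_def using set_body by blast
  have bS: "b \<in> {1,2}" unfolding b_def by simp
  have YS: "set Y \<subseteq> {1,2,sHs}" unfolding Y_def using set_body Rest by fastforce
  have lbk: "length bk = 2 * k" unfolding bk_def using k by simp
  have lY: "length Y \<le> 2 * length s + 2 + length Rest" unfolding Y_def by simp
  have X0S: "set X0 \<subseteq> {1,2,sDn,sUp}" unfolding X0_def using set_concat_replicate[of j "[sUp, sDn]"] by auto
  have lX0: "length X0 = 2 * j + nD + 3" unfolding X0_def by (simp add: length_concat sum_list_replicate)
  have eP0: "rev X0 @ sUp # LL = sDn # rev P0" unfolding X0_def P0_def LL_def by (simp add: replicate_append_same)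
  have "reach AA (cntc d (Suc u) j nD (cur s (Suc k) @ Rest)) 1 (cfg0 12 (sUp # LL) (X0 @ cur s (Suc k) @ Rest))"
  proof -
    have "cntc d (Suc u) j nD (cur s (Suc k) @ Rest) = cfg0 11 LL (sU # X0 @ cur s (Suc k) @ Rest)"
      by (simp add: cntc_def LL_def X0_def)
    then show ?thesis by (simp only:) (rule a_stepR[OF _ t11_U], simp_all)
  qed
  also have "reach AA (cfg0 12 (sUp # LL) (X0 @ cur s (Suc k) @ Rest)) (length X0) (cfg0 12 (rev X0 @ sUp # LL) (cur s (Suc k) @ Rest))"
    by (rule a_walkRi) (use X0S in \<open>auto intro!: t12_skip\<close>)
  also have "reach AA (cfg0 12 (rev X0 @ sUp # LL) (cur s (Suc k) @ Rest)) (2 * k + 3)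
     (cfg0 13 (2 # rev bk @ rev X0 @ sUp # LL) (b # Y))"
    unfolding bk_def b_def Y_def by (rule phK[OF k])
  also have "reach AA (cfg0 13 (2 # rev bk @ rev X0 @ sUp # LL) (b # Y)) 1 (cfg0 14 (rev bk @ rev X0 @ sUp # LL) (2 # b # Y))"
    by (rule a_stepL[OF _ t13]) (use bS in simp_all)
  also have "rev bk @ rev X0 @ sUp # LL = rev bk @ sDn # rev P0" using eP0 by simp
  also have "reach AA (cfg0 14 (rev bk @ sDn # rev P0) (2 # b # Y)) (Suc (length bk)) (cfg0 15 (rev P0) (sDn # bk @ sK2 # b # Y))"
    by (rule a_walkL'i[OF _ _ t14]) (use bkS in \<open>auto intro!: t15_skip\<close>)
  also have "reach AA (cfg0 15 (rev P0) (sDn # bk @ sK2 # b # Y)) 1 (cfg0 16 (sDn # rev P0) (bk @ sK2 # b # Y))"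
    by (rule a_stepR[OF _ t15_stop]) simp_all
  also have "cfg0 16 (sDn # rev P0) (bk @ sK2 # b # Y) =
     cfg0 16 (rev ((P0 @ [sDn]) @ map cm (take 0 bk))) (drop 0 bk @ (sK2 # b # Y) @ take 0 bk)" by simp
  also have "reach AA (cfg0 16 (rev ((P0 @ [sDn]) @ map cm (take 0 bk))) (drop 0 bk @ (sK2 # b # Y) @ take 0 bk))
     ((length bk - 0) * (2 * (length bk + length (sK2 # b # Y)) + 4))
     (cfg0 16 (rev ((P0 @ [sDn]) @ map cm bk)) ((sK2 # b # Y) @ bk))"
    by (rule phCopy) (use bkS bS YS in auto)
  also have "cfg0 16 (rev ((P0 @ [sDn]) @ map cm bk)) ((sK2 # b # Y) @ bk) = cfg0 16 (rev (P0 @ sDn # map cm bk)) (sK2 # b # (Y @ bk))"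
    by simp
  also have "reach AA (cfg0 16 (rev (P0 @ sDn # map cm bk)) (sK2 # b # (Y @ bk))) (2 * length (Y @ bk) + length bk + 15)
     (cfg0 31 (rev P0) (sDn # bk @ sK2 # b # (Y @ bk) @ [1,1,2,b,1,1]))"
    by (rule phApp) (use bkS bS YS in auto)
  finally have r1: "reach AA (cntc d (Suc u) j nD (cur s (Suc k) @ Rest))
     (1 + length X0 + (2 * k + 3) + 1 + Suc (length bk) + 1 + (length bk - 0) * (2 * (length bk + length (sK2 # b # Y)) + 4)
      + (2 * length (Y @ bk) + length bk + 15))
     (cfg0 31 (rev P0) (sDn # bk @ sK2 # b # (Y @ bk) @ [1,1,2,b,1,1]))" .
  have e1: "cur s k @ Rest @ emitP s k = bk @ sK2 # b # (Y @ bk) @ [1,1,2,b,1,1]"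
    using k unfolding cur_def emitP_def es_def bk_def b_def Y_def by simp
  have r2: "reach AA (cfg0 31 (rev P0) (sDn # bk @ sK2 # b # (Y @ bk) @ [1,1,2,b,1,1])) (2 * j + nD + 5)
     (cntc d u (Suc j) nD (cur s k @ Rest @ emitP s k))"
  proof (cases u)
    case 0
    define ys where "ys = concat (replicate (Suc j) [sUp, sDn]) @ replicate (Suc nD) sDn"
    have "rev P0 = rev ys @ sE # rev (DL d)" unfolding P0_def ys_def 0 by simp
    moreover have "reach AA (cfg0 31 (rev ys @ sE # rev (DL d)) (sDn # bk @ sK2 # b # (Y @ bk) @ [1,1,2,b,1,1])) (Suc (length ys))
       (cfg0 11 (rev (DL d)) (sE # ys @ sDn # bk @ sK2 # b # (Y @ bk) @ [1,1,2,b,1,1]))"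
      by (rule a_walkL'i[OF _ _ t31_Dn])
         (use set_concat_replicate[of "Suc j" "[sUp, sDn]"] in \<open>auto simp: ys_def intro!: t11_skip\<close>)
    moreover have "Suc (length ys) \<le> 2 * j + nD + 5" unfolding ys_def by (simp add: length_concat sum_list_replicate)
    ultimately show ?thesis unfolding e1 cntc_def 0 ys_def
      by (auto elim!: reach_conv simp: replicate_append_same replicate_app_Cons_same)
  next
    case (Suc u')
    define ys where "ys = sDn # concat (replicate (Suc j) [sUp, sDn]) @ replicate (Suc nD) sDn"
    have "rev P0 = rev ys @ sU # rev (DL d @ sE # concat (replicate u' [sU, sDn]))"
    proof -
      have "concat (replicate (Suc u') [sU, sDn]) = concat (replicate u' [sU, sDn]) @ [sU, sDn]"
        by (rule concat_replicate_snoc)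
      then show ?thesis unfolding P0_def ys_def Suc by (simp add: replicate_append_same replicate_app_Cons_same)
    qed
    moreover have "reach AA (cfg0 31 (rev ys @ sU # rev (DL d @ sE # concat (replicate u' [sU, sDn]))) (sDn # bk @ sK2 # b # (Y @ bk) @ [1,1,2,b,1,1])) (Suc (length ys))
       (cfg0 11 (rev (DL d @ sE # concat (replicate u' [sU, sDn]))) (sU # ys @ sDn # bk @ sK2 # b # (Y @ bk) @ [1,1,2,b,1,1]))"
      by (rule a_walkL'i[OF _ _ t31_Dn])
         (use set_concat_replicate[of "Suc j" "[sUp, sDn]"] in \<open>auto simp: ys_def intro!: t11_skip\<close>)
    moreover have "Suc (length ys) \<le> 2 * j + nD + 5" unfolding ys_def by (simp add: length_concat sum_list_replicate)
    ultimately show ?thesis unfolding e1 cntc_def Suc ys_def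
      by (auto elim!: reach_conv simp: replicate_append_same replicate_app_Cons_same)
  qed
  have bnd: "1 + length X0 + (2 * k + 3) + 1 + Suc (length bk) + 1 + (length bk - 0) * (2 * (length bk + length (sK2 # b # Y)) + 4)
      + (2 * length (Y @ bk) + length bk + 15) + (2 * j + nD + 5) \<le> 3 * (N + 5) * (N + 5)"
  proof -
    have a: "length bk + length Y \<le> N" "length X0 \<le> N" "2 * j + nD + 5 \<le> N + 5" "length bk \<le> N" "length Y \<le> N"
      using lbk lX0 N k unfolding Y_def by simp_all
    have c: "(length bk - 0) * (2 * (length bk + length (sK2 # b # Y)) + 4) \<le> N * (2 * (N + 2) + 4)"
      using a by (intro mult_mono) auto
    have "1 + length X0 + (2 * k + 3) + 1 + Suc (length bk) + 1 + (length bk - 0) * (2 * (length bk + length (sK2 # b # Y)) + 4)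
      + (2 * length (Y @ bk) + length bk + 15) + (2 * j + nD + 5) \<le> 2 * (N * N) + 30 * N + 40"
      using a c lbk by (simp add: algebra_simps)
    also have "\<dots> \<le> 3 * (N + 5) * (N + 5)" by (simp add: algebra_simps)
    finally show ?thesis .
  qed
  show ?thesis using reach_trans[OF r1 r2] bnd by (rule reach_mono)
qed


primrec emK :: "bool list \<Rightarrow> nat \<Rightarrow> nat \<Rightarrow> nat list" where
  "emK s k 0 = []"
| "emK s k (Suc u) = emitP s (k - 1) @ emK s (k - 1) u"

lemma phLoop:
  assumes "u \<le> k" "k \<le> length s" "set Rest \<subseteq> {1,2,sHs}"
    and "2 * (u + j) + nD + 2 * length s + length Rest + length (emK s k u) + 4 * k + 8 \<le> N"
  shows "reach AA (cntc d u j nD (cur s k @ Rest)) (u * (3 * (N + 5) * (N + 5)))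
     (cntc d 0 (j + u) nD (cur s (k - u) @ Rest @ emK s k u))"
  using assms
proof (induction u arbitrary: j k Rest)
  case 0 then show ?case by (simp add: reach_refl)
next
  case (Suc u)
  then obtain k0 where k0: "k = Suc k0" by (cases k) auto
  have k0s: "k0 < length s" using Suc.prems k0 by simp
  have em: "emK s k (Suc u) = emitP s k0 @ emK s k0 u" using k0 by simp
  have R': "set (Rest @ emitP s k0) \<subseteq> {1,2,sHs}"
    using Suc.prems(3) set_body unfolding emitP_def es_def by fastforce
  have "reach AA (cntc d (Suc u) j nD (cur s (Suc k0) @ Rest)) (3 * (N + 5) * (N + 5))
     (cntc d u (Suc j) nD (cur s k0 @ Rest @ emitP s k0))"
    by (rule phIter[OF k0s Suc.prems(3)]) (use Suc.prems(4) k0 in simp)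
  also have "reach AA (cntc d u (Suc j) nD (cur s k0 @ Rest @ emitP s k0)) (u * (3 * (N + 5) * (N + 5)))
     (cntc d 0 (Suc j + u) nD (cur s (k0 - u) @ (Rest @ emitP s k0) @ emK s k0 u))"
    using Suc.IH[of k0 "Rest @ emitP s k0" "Suc j"] Suc.prems k0 R' em by simp
  finally show ?case using k0 em by (elim reach_conv) simp_all
qed

end

context cotm begin

definition PreC :: "nat \<Rightarrow> nat \<Rightarrow> nat \<Rightarrow> nat list" where
  "PreC d T nD = DL d @ sE # concat (replicate T [sU, sDn]) @ replicate (Suc (Suc nD)) sDn"

lemma phIn:
  assumes R: "set Rest \<subseteq> {1,2,sHs}"
  shows "reach AA (cfg0 9 (rev (PreC d T nD)) (es s @ Rest)) (4 * length s + nD + 4)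
    (cntc d T 0 nD (cur s (length s) @ Rest))"
proof -
  have "reach AA (cfg0 9 (rev (PreC d T nD)) (body s @ 1 # (1 # Rest))) (2 * length s)
     (cfg0 9 (rev (body s) @ rev (PreC d T nD)) (1 # (1 # Rest)))" by (rule phP)
  then have r1: "reach AA (cfg0 9 (rev (PreC d T nD)) (es s @ Rest)) (2 * length s)
     (cfg0 9 (rev (body s) @ rev (PreC d T nD)) (1 # 1 # Rest))" by (simp add: es_def)
  have cs: "cur s (length s) = body s @ [sK1, 1]" by (simp add: cur_def)
  show ?thesis
  proof (cases T)
    case 0
    define ys where "ys = replicate (Suc (Suc nD)) sDn @ body s"
    have "rev (body s) @ rev (PreC d T nD) = rev ys @ sE # rev (DL d)"
      unfolding ys_def PreC_def 0 by simp
    moreover have "reach AA (cfg0 9 (rev ys @ sE # rev (DL d)) (1 # 1 # Rest)) (Suc (length ys))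
       (cfg0 11 (rev (DL d)) (sE # ys @ sK1 # 1 # Rest))"
      by (rule a_walkL'i[OF _ _ t9_1]) (use set_body in \<open>auto simp: ys_def intro!: t11_skip\<close>)
    ultimately have r2: "reach AA (cfg0 9 (rev (body s) @ rev (PreC d T nD)) (1 # 1 # Rest)) (Suc (length ys))
       (cfg0 11 (rev (DL d)) (sE # ys @ sK1 # 1 # Rest))" by simp
    show ?thesis using reach_trans[OF r1 r2] unfolding cntc_def 0 cs ys_def
      by (rule reach_conv) simp_all
  next
    case (Suc T')
    define ys where "ys = sDn # replicate (Suc (Suc nD)) sDn @ body s"
    have "concat (replicate (Suc T') [sU, sDn]) = concat (replicate T' [sU, sDn]) @ [sU, sDn]"
      by (rule concat_replicate_snoc)
    then have "rev (body s) @ rev (PreC d T nD) = rev ys @ sU # rev (DL d @ sE # concat (replicate T' [sU, sDn]))"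
      unfolding ys_def PreC_def Suc by simp
    moreover have "reach AA (cfg0 9 (rev ys @ sU # rev (DL d @ sE # concat (replicate T' [sU, sDn]))) (1 # 1 # Rest)) (Suc (length ys))
       (cfg0 11 (rev (DL d @ sE # concat (replicate T' [sU, sDn]))) (sU # ys @ sK1 # 1 # Rest))"
      by (rule a_walkL'i[OF _ _ t9_1]) (use set_body in \<open>auto simp: ys_def intro!: t11_skip\<close>)
    ultimately have r2: "reach AA (cfg0 9 (rev (body s) @ rev (PreC d T nD)) (1 # 1 # Rest)) (Suc (length ys))
       (cfg0 11 (rev (DL d @ sE # concat (replicate T' [sU, sDn]))) (sU # ys @ sK1 # 1 # Rest))" by simp
    show ?thesis using reach_trans[OF r1 r2] unfolding cntc_def Suc cs ys_def
      by (rule reach_conv) simp_all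
  qed
qed

lemma phConv:
  assumes "\<forall>(a, b)\<in>set ps. a \<in> {2, sK2} \<and> b \<in> {1,2}" "t \<in> {1, sK1}"
  shows "reach AA (cfg0 33 L (concat (map (\<lambda>(a, b). [a, b]) ps) @ t # 1 # R)) (2 * length ps + 2)
    (cfg0 9 (replicate (2 * length ps + 2) sDn @ L) R)"
  using assms(1)
proof (induction ps arbitrary: L)
  case Nil
  have "reach AA (cfg0 33 L (t # 1 # R)) 1 (cfg0 35 (sDn # L) (1 # R))"
    by (rule a_stepR[OF _ t33_1]) (use assms(2) in auto)
  also have "reach AA (cfg0 35 (sDn # L) (1 # R)) 1 (cfg0 9 (sDn # sDn # L) R)"
    by (rule a_stepR[OF _ t35]) simp_all
  finally show ?case by (rule reach_conv) (simp_all add: numeral_2_eq_2)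
next
  case (Cons p ps)
  obtain a b where p: "p = (a, b)" by (cases p)
  have ab: "a \<in> {2, sK2}" "b \<in> {1,2}" using Cons.prems p by auto
  have "reach AA (cfg0 33 L (a # b # concat (map (\<lambda>(a, b). [a, b]) ps) @ t # 1 # R)) 1
     (cfg0 34 (sDn # L) (b # concat (map (\<lambda>(a, b). [a, b]) ps) @ t # 1 # R))"
    by (rule a_stepR[OF _ t33_2]) (use ab in auto)
  also have "reach AA (cfg0 34 (sDn # L) (b # concat (map (\<lambda>(a, b). [a, b]) ps) @ t # 1 # R)) 1
     (cfg0 33 (sDn # sDn # L) (concat (map (\<lambda>(a, b). [a, b]) ps) @ t # 1 # R))"
    by (rule a_stepR[OF _ t34]) (use ab in auto)
  also have "reach AA (cfg0 33 (sDn # sDn # L) (concat (map (\<lambda>(a, b). [a, b]) ps) @ t # 1 # R)) (2 * length ps + 2)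
    (cfg0 9 (replicate (2 * length ps + 2) sDn @ sDn # sDn # L) R)"
    using Cons by simp
  finally show ?case unfolding p by (rule reach_conv) (simp_all add: replicate_app_Cons_same numeral_2_eq_2)
qed


lemma concat_pairs_body: "concat (map (\<lambda>(a, b). [a, b]) (map (\<lambda>x. (2, bs x)) xs)) = body xs"
  by (induction xs) auto

lemma concat_pairs_body': "concat (map ((\<lambda>(a, b). [a, b]) \<circ> (\<lambda>x. (2, bs x))) xs) = body xs"
  by (induction xs) auto

lemma t32_g: "s \<in> {sUp, sDn} \<Longrightarrow> dA 32 s = (32, if s = sUp then sU else s, Right)"
  using t32_Up t32_Dn by auto

lemma map_unmark: "map (\<lambda>x. if x = sUp then sU else x) (concat (replicate T [sUp, sDn])) = concat (replicate T [sU, sDn])"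
  by (induction T) auto

lemma cur_pairs: assumes "k \<le> length s"
  shows "\<exists>ps t. cur s k = concat (map (\<lambda>(a, b). [a, b]) ps) @ [t, 1] \<and> length ps = length s \<and>
     (\<forall>(a, b)\<in>set ps. a \<in> {2, sK2} \<and> b \<in> {1,2}) \<and> t \<in> {1, sK1}"
proof (cases "k < length s")
  case True
  define ps where "ps = map (\<lambda>x. (2::nat, bs x)) (take k s) @ (sK2, bs (s ! k)) # map (\<lambda>x. (2::nat, bs x)) (drop (Suc k) s)"
  have "cur s k = concat (map (\<lambda>(a, b). [a, b]) ps) @ [1, 1]"
    using True unfolding ps_def cur_def by (simp add: concat_pairs_body concat_pairs_body')
  moreover have "length ps = length s" using True unfolding ps_def by simp
  moreover have "\<forall>(a, b)\<in>set ps. a \<in> {2, sK2} \<and> b \<in> {1,2}" unfolding ps_def by auto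
  ultimately show ?thesis by blast
next
  case False
  define ps where "ps = map (\<lambda>x. (2::nat, bs x)) s"
  have "cur s k = concat (map (\<lambda>(a, b). [a, b]) ps) @ [sK1, 1]"
    using False unfolding ps_def cur_def by (simp add: concat_pairs_body concat_pairs_body')
  moreover have "length ps = length s" unfolding ps_def by simp
  moreover have "\<forall>(a, b)\<in>set ps. a \<in> {2, sK2} \<and> b \<in> {1,2}" unfolding ps_def by auto
  ultimately show ?thesis by blast
qed

lemma phOut:
  assumes k: "k \<le> length s"
  shows "reach AA (cntc d 0 T nD (cur s k @ Rest)) (2 * T + nD + 2 * length s + 8)
    (cfg0 9 (rev (PreC d T (nD + length (es s)))) Rest)"
proof -
  define g where "g = (\<lambda>x. if x = sUp then sU else x)"
  define xs where "xs = concat (replicate T [sUp, sDn]) @ replicate (Suc (Suc nD)) sDn"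
  obtain ps t where ps: "cur s k = concat (map (\<lambda>(a, b). [a, b]) ps) @ [t, 1]" "length ps = length s"
     "\<forall>(a, b)\<in>set ps. a \<in> {2, sK2} \<and> b \<in> {1,2}" "t \<in> {1, sK1}"
    using cur_pairs[OF k] by blast
  define L' where "L' = rev (map g xs) @ sE # rev (DL d)"
  have mg: "map g xs = concat (replicate T [sU, sDn]) @ replicate (Suc (Suc nD)) sDn"
    unfolding g_def xs_def using map_unmark[of T] by simp
  have "reach AA (cntc d 0 T nD (cur s k @ Rest)) (Suc (length xs)) (cfg0 32 L' (cur s k @ Rest))"
  proof -
    have "reach AA (cfg0 11 (rev (DL d)) (sE # xs @ (cur s k @ Rest))) (Suc (length xs)) (cfg0 32 (rev (map g xs) @ sE # rev (DL d)) (cur s k @ Rest))"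
    proof (rule a_walkR'[OF _ _ t11_E])
      have "set xs \<subseteq> {sUp, sDn}" using set_concat_replicate[of T "[sUp, sDn]"] unfolding xs_def by auto
      then show "\<forall>s\<in>set xs. dA 32 s = (32, g s, move.Right)" unfolding g_def using t32_g by blast
    qed simp_all
    then show ?thesis unfolding cntc_def xs_def L'_def by simp
  qed
  also have "reach AA (cfg0 32 L' (cur s k @ Rest)) 1 (cfg0 33 L' (cur s k @ Rest))"
  proof (cases ps)
    case Nil
    then show ?thesis using ps by simp (rule a_stepS[OF _ t32_stop], auto)
  next
    case (Cons p ps')
    obtain a b where p: "p = (a, b)" by (cases p)
    then have "a \<in> {2, sK2}" using ps(3) Cons by auto
    then show ?thesis using ps Cons p by simp (rule a_stepS[OF _ t32_stop], auto)
  qed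
  also have "reach AA (cfg0 33 L' (cur s k @ Rest)) (2 * length ps + 2) (cfg0 9 (replicate (2 * length ps + 2) sDn @ L') Rest)"
    using phConv[OF ps(3,4), of L' Rest] ps(1) by simp
  finally have r: "reach AA (cntc d 0 T nD (cur s k @ Rest)) (Suc (length xs) + 1 + (2 * length ps + 2))
     (cfg0 9 (replicate (2 * length ps + 2) sDn @ L') Rest)" .
  have e: "replicate (2 * length ps + 2) sDn @ L' = rev (PreC d T (nD + length (es s)))"
    unfolding L'_def mg PreC_def es_def ps(2)
    by (simp add: replicate_add[symmetric] replicate_app_Cons_same algebra_simps)
  have b: "Suc (length xs) + 1 + (2 * length ps + 2) \<le> 2 * T + nD + 2 * length s + 8"
    unfolding xs_def ps(2) by (simp add: length_concat sum_list_replicate)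
  show ?thesis using r e b by (auto elim: reach_conv)
qed


lemma phSample:
  assumes T: "T \<le> length s" and R: "set Rest \<subseteq> {1,2,sHs}"
    and N: "2 * T + nD + 6 * length s + length Rest + length (emK s (length s) T) + 8 \<le> N"
  shows "reach AA (cfg0 9 (rev (PreC d T nD)) (es s @ Rest)) ((T + 1) * (3 * (N + 5) * (N + 5)))
     (cfg0 9 (rev (PreC d T (nD + length (es s)))) (Rest @ emK s (length s) T))"
proof -
  have "reach AA (cfg0 9 (rev (PreC d T nD)) (es s @ Rest)) (4 * length s + nD + 4) (cntc d T 0 nD (cur s (length s) @ Rest))"
    by (rule phIn[OF R])
  also have "reach AA (cntc d T 0 nD (cur s (length s) @ Rest)) (T * (3 * (N + 5) * (N + 5)))
     (cntc d 0 (0 + T) nD (cur s (length s - T) @ Rest @ emK s (length s) T))"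
    by (rule phLoop) (use T R N in auto)
  also have "reach AA (cntc d 0 (0 + T) nD (cur s (length s - T) @ Rest @ emK s (length s) T)) (2 * T + nD + 2 * length s + 8)
     (cfg0 9 (rev (PreC d T (nD + length (es s)))) (Rest @ emK s (length s) T))"
    using phOut[of "length s - T" s d T nD "Rest @ emK s (length s) T"] by simp
  finally show ?thesis
  proof (rule reach_mono)
    have "4 * length s + nD + 4 + (2 * T + nD + 2 * length s + 8) \<le> 3 * (N + 5) * (N + 5)"
    proof -
      have "4 * length s + nD + 4 + (2 * T + nD + 2 * length s + 8) \<le> 2 * N + 12" using N by simp
      also have "\<dots> \<le> 3 * (N + 5) * (N + 5)" by (simp add: algebra_simps)
      finally show ?thesis .
    qed
    then show "4 * length s + nD + 4 + T * (3 * (N + 5) * (N + 5)) + (2 * T + nD + 2 * length s + 8)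
      \<le> (T + 1) * (3 * (N + 5) * (N + 5))" by (simp add: algebra_simps)
  qed
qed

lemma length_es[simp]: "length (es xs) = 2 * length xs + 2" by (simp add: es_def)

lemma length_PreC: "length (PreC d T nD) = length (DL d) + 2 * T + nD + 3"
  by (simp add: PreC_def length_concat sum_list_replicate)

lemma phSamples:
  assumes "\<forall>s\<in>set S. T \<le> length s" and O: "set OUT \<subseteq> {1,2}"
    and N: "3 * (length (PreC d T nD) + length (concat (map es S)) + length OUT
             + length (concat (map (\<lambda>s. emK s (length s) T) S)) + 1) + 8 \<le> N"
  shows "reach AA (cfg0 9 (rev (PreC d T nD)) (concat (map es S) @ sHs # OUT)) (length S * ((T + 1) * (3 * (N + 5) * (N + 5))))
     (cfg0 9 (rev (PreC d T (nD + length (concat (map es S))))) (sHs # OUT @ concat (map (\<lambda>s. emK s (length s) T) S)))"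
  using assms
proof (induction S arbitrary: nD OUT)
  case Nil then show ?case by (simp add: reach_refl)
next
  case (Cons s S)
  have Ts: "T \<le> length s" using Cons.prems by simp
  have R: "set (concat (map es S) @ sHs # OUT) \<subseteq> {1,2,sHs}"
  proof -
    have "\<forall>x \<in> set (concat (map es S)). x \<in> {1,2}" by (auto simp: es_def dest: set_body')
    then show ?thesis using Cons.prems(2) by auto
  qed
  have O': "set (OUT @ emK s (length s) T) \<subseteq> {1,2}"
  proof -
    have "set (emK s k u) \<subseteq> {1,2}" for k u
      by (induction u arbitrary: k) (use set_body in \<open>fastforce simp: emitP_def es_def\<close>)+
    then show ?thesis using Cons.prems(2) by auto
  qed
  have "reach AA (cfg0 9 (rev (PreC d T nD)) (es s @ (concat (map es S) @ sHs # OUT))) ((T + 1) * (3 * (N + 5) * (N + 5)))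
     (cfg0 9 (rev (PreC d T (nD + length (es s)))) ((concat (map es S) @ sHs # OUT) @ emK s (length s) T))"
    by (rule phSample[OF Ts R]) (use Cons.prems(3) in \<open>simp add: length_PreC\<close>)
  also have "(concat (map es S) @ sHs # OUT) @ emK s (length s) T = concat (map es S) @ sHs # (OUT @ emK s (length s) T)"
    by simp
  also have "reach AA (cfg0 9 (rev (PreC d T (nD + length (es s)))) (concat (map es S) @ sHs # (OUT @ emK s (length s) T)))
     (length S * ((T + 1) * (3 * (N + 5) * (N + 5))))
     (cfg0 9 (rev (PreC d T (nD + length (es s) + length (concat (map es S))))) (sHs # (OUT @ emK s (length s) T) @ concat (map (\<lambda>s. emK s (length s) T) S)))"
    by (rule Cons.IH) (use Cons.prems O' in \<open>simp_all add: length_PreC\<close>)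
  finally show ?case by (rule reach_conv) (simp_all add: algebra_simps)
qed

end


lemma cfg_L_zero: "cfg q p (L @ [0]) R = cfg q p L R"
  unfolding cfg_def tp_of_def nth0_def by (auto intro!: ext simp: nth_append)

lemma cfg_R_zeros: "cfg q p L (R @ replicate n 0) = cfg q p L R"
  unfolding cfg_def tp_of_def nth0_def by (auto intro!: ext simp: nth_append)

lemma cfg0_R_zeros: "cfg0 q L (R @ replicate n 0) = cfg0 q L R"
  unfolding cfg0_def by (rule cfg_R_zeros)

lemma cfg0_R_zero: "cfg0 q L (R @ [0]) = cfg0 q L R"
  using cfg0_R_zeros[of q L R "Suc 0"] by simp

lemma tm_init_cfg0: "tm_init x = cfg0 0 [] (map sym_of_bit x)"
  unfolding tm_init_def cfg0_def cfg_def tp_of_def nth0_def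
  by (auto intro!: ext simp: nat_less_iff)

context cotm begin

lemma phCarry:
  assumes "x \<le> 2" "set w \<subseteq> {1,2}" "y \<in> {1,2}"
  shows "reach AA (cfg0 (37 + x) (rev w @ g # L) (y # R)) (Suc (length w))
    (cfg0 (37 + hd (w @ [y])) L (g # tl (w @ [y]) @ x # R))"
  using assms
proof (induction w arbitrary: x y R rule: rev_induct)
  case Nil
  then show ?case by simp (rule a_stepL[OF _ t37_b], auto)
next
  case (snoc y' w)
  have "reach AA (cfg0 (37 + x) (y' # rev w @ g # L) (y # R)) 1 (cfg0 (37 + y) (rev w @ g # L) (y' # x # R))"
    by (rule a_stepL[OF _ t37_b]) (use snoc.prems in auto)
  also have "reach AA (cfg0 (37 + y) (rev w @ g # L) (y' # x # R)) (Suc (length w))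
     (cfg0 (37 + hd (w @ [y'])) L (g # tl (w @ [y']) @ y # x # R))"
    by (rule snoc.IH) (use snoc.prems in auto)
  finally show ?case by (rule reach_conv) (cases w; simp)+
qed

lemma phPass:
  assumes w: "set w \<subseteq> {1,2}" and g: "g \<in> {sU, sDn, sHs}"
  shows "reach AA (cfg0 36 (rev w @ g # c # L0) (0 # R)) (length w + 2) (cfg0 40 L0 (c # w @ 0 # 0 # R))"
proof (cases w rule: rev_cases)
  case Nil
  have "reach AA (cfg0 36 (g # c # L0) (0 # R)) 1 (cfg0 37 (c # L0) (g # 0 # R))"
    by (rule a_stepL[OF _ t36_0]) simp_all
  also have "reach AA (cfg0 37 (c # L0) (g # 0 # R)) 1 (cfg0 40 L0 (c # 0 # 0 # R))"
    using a_stepL[OF _ t37_g[of 0 g], of 1 c L0 "0 # R"] g by simp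
  finally show ?thesis by (rule reach_conv) (use Nil in simp_all)
next
  case (snoc w0 y)
  have y: "y \<in> {1,2}" and w0: "set w0 \<subseteq> {1,2}" using w snoc by auto
  have hw: "hd w \<le> 2" using w snoc by (cases w0) auto
  have "reach AA (cfg0 36 (y # rev w0 @ g # c # L0) (0 # R)) 1 (cfg0 37 (rev w0 @ g # c # L0) (y # 0 # R))"
    by (rule a_stepL[OF _ t36_0]) simp_all
  also have "reach AA (cfg0 37 (rev w0 @ g # c # L0) (y # 0 # R)) (Suc (length w0))
     (cfg0 (37 + hd (w0 @ [y])) (c # L0) (g # tl (w0 @ [y]) @ 0 # 0 # R))"
    using phCarry[of 0 w0 y g "c # L0" "0 # R"] w0 y by simp
  also have "reach AA (cfg0 (37 + hd (w0 @ [y])) (c # L0) (g # tl (w0 @ [y]) @ 0 # 0 # R)) 1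
     (cfg0 40 L0 (c # hd (w0 @ [y]) # tl (w0 @ [y]) @ 0 # 0 # R))"
    by (rule a_stepL[OF _ t37_g]) (use hw snoc g in auto)
  finally show ?thesis by (rule reach_conv) (use snoc in \<open>cases w0; simp\<close>)+
qed


lemma phClean:
  assumes "set gp \<subseteq> {sU, sDn, sHs}" "gp \<noteq> []" and O: "set OUT \<subseteq> {1,2}"
  shows "\<exists>z'. reach AA (cfg0 36 (rev gp @ sE # rev (DL d)) (OUT @ 0 # replicate z 0)) (length gp * (2 * length OUT + 4))
     (cfg0 41 (rev (concat (replicate d [2,2]))) (1 # 1 # OUT @ replicate z' 0))"
  using assms(1,2)
proof (induction gp arbitrary: z rule: rev_induct)
  case Nil then show ?case by simp
next
  case (snoc g gp0)
  have g: "g \<in> {sU, sDn, sHs}" using snoc.prems by simp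
  have w: "reach AA (cfg0 36 (rev (gp0 @ [g]) @ sE # rev (DL d)) (OUT @ 0 # replicate z 0)) (length OUT)
      (cfg0 36 (rev OUT @ g # rev gp0 @ sE # rev (DL d)) (0 # replicate z 0))"
  proof -
    have "reach AA (cfg0 36 (rev (gp0 @ [g]) @ sE # rev (DL d)) (OUT @ (0 # replicate z 0))) (length OUT)
      (cfg0 36 (rev OUT @ (rev (gp0 @ [g]) @ sE # rev (DL d))) (0 # replicate z 0))"
      by (rule a_walkRi) (use O in \<open>auto intro!: t36_skip\<close>)
    then show ?thesis by simp
  qed
  show ?case
  proof (cases gp0 rule: rev_cases)
    case Nil
    have "reach AA (cfg0 36 (rev OUT @ g # sE # rev (DL d)) (0 # replicate z 0)) (length OUT + 2)
      (cfg0 40 (rev (DL d)) (sE # OUT @ 0 # 0 # replicate z 0))"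
      by (rule phPass[OF O g])
    also have "reach AA (cfg0 40 (rev (DL d)) (sE # OUT @ 0 # 0 # replicate z 0)) 1
      (cfg0 41 (rev (concat (replicate d [2,2]))) (1 # 1 # OUT @ 0 # 0 # replicate z 0))"
      unfolding DL_def by simp (rule a_stepL[OF _ t40_E], simp_all)
    finally have r: "reach AA (cfg0 36 (rev OUT @ g # sE # rev (DL d)) (0 # replicate z 0)) (length OUT + 2 + 1)
      (cfg0 41 (rev (concat (replicate d [2,2]))) (1 # 1 # OUT @ replicate (Suc (Suc z)) 0))" by simp
    show ?thesis using reach_trans[OF w[unfolded Nil, simplified] r] Nil by (intro exI[of _ "Suc (Suc z)"]) (auto elim!: reach_conv)
  next
    case (snoc gp1 c)
    have c: "c \<in> {sU, sDn, sHs}" using snoc.prems \<open>gp0 = gp1 @ [c]\<close> by simp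
    have "reach AA (cfg0 36 (rev OUT @ g # c # rev gp1 @ sE # rev (DL d)) (0 # replicate z 0)) (length OUT + 2)
      (cfg0 40 (rev gp1 @ sE # rev (DL d)) (c # OUT @ 0 # 0 # replicate z 0))"
      by (rule phPass[OF O g])
    also have "reach AA (cfg0 40 (rev gp1 @ sE # rev (DL d)) (c # OUT @ 0 # 0 # replicate z 0)) 1
      (cfg0 36 (rev gp0 @ sE # rev (DL d)) (OUT @ 0 # replicate (Suc z) 0))"
      using a_stepR[OF _ t40_g[OF c], of 1 "rev gp1 @ sE # rev (DL d)" "OUT @ 0 # 0 # replicate z 0"] snoc by simp
    finally have r: "reach AA (cfg0 36 (rev OUT @ g # rev gp0 @ sE # rev (DL d)) (0 # replicate z 0)) (length OUT + 2 + 1)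
      (cfg0 36 (rev gp0 @ sE # rev (DL d)) (OUT @ 0 # replicate (Suc z) 0))" using snoc by simp
    obtain z' where r2: "reach AA (cfg0 36 (rev gp0 @ sE # rev (DL d)) (OUT @ 0 # replicate (Suc z) 0)) (length gp0 * (2 * length OUT + 4))
     (cfg0 41 (rev (concat (replicate d [2,2]))) (1 # 1 # OUT @ replicate z' 0))"
      using snoc.IH[of "Suc z"] snoc.prems \<open>gp0 = gp1 @ [c]\<close> by auto
    show ?thesis using reach_trans[OF reach_trans[OF w r] r2] by (auto intro!: exI elim!: reach_conv simp: algebra_simps)
  qed
qed

lemma phRew:
  "reach AA (cfg0 41 (rev (concat (replicate d [2,2]))) (1 # R)) (2 * d + 2) (cfg0 42 [] (concat (replicate d [2,2]) @ 1 # R))"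
proof -
  define X where "X = concat (replicate d [2::nat, 2])"
  have lX: "length X = 2 * d" unfolding X_def by (simp add: length_concat sum_list_replicate)
  have XS: "set X \<subseteq> {2}" unfolding X_def using set_concat_replicate[of d "[2::nat, 2]"] by auto
  have "cfg0 41 (rev X) (1 # R) = cfg 41 (int (length X)) (rev X @ [0]) (1 # R)"
    unfolding cfg0_def by (simp add: cfg_L_zero)
  also have "reach AA (cfg 41 (int (length X)) (rev X @ [0]) (1 # R)) (Suc (length X))
     (cfg 41 (int (length X) - int (Suc (length X))) [] (0 # map id X @ id 1 # R))"
    by (rule reach_walkL[where \<delta>=dA and g=id and q=41 and y=1 and ys=X and B="Suc (length X)" and p="int (length X)" and z=0 and L="[]" and R=R])
       (use XS in \<open>auto intro!: t41_b\<close>)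
  also have "cfg 41 (int (length X) - int (Suc (length X))) [] (0 # map id X @ id 1 # R) = cfg 41 (-1) [] (0 # X @ 1 # R)"
    by simp
  also have "reach AA (cfg 41 (-1) [] (0 # X @ 1 # R)) 1 (cfg 42 0 [0] (X @ 1 # R))"
    using reach_stepR[where \<delta>=dA and B=1 and p="-1" and L="[]" and R="X @ 1 # R", OF _ t41_0] by simp
  also have "cfg 42 0 [0] (X @ 1 # R) = cfg0 42 [] (X @ 1 # R)"
    unfolding cfg0_def using cfg_L_zero[of 42 0 "[]" "X @ 1 # R"] by simp
  finally show ?thesis unfolding X_def by (rule reach_conv) (simp_all add: lX[unfolded X_def])
qed


lemma body_rep_True: "body (replicate n True) = concat (replicate n [2,2])"
  by (induction n) (auto simp: bs_def sym_of_bit_def)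

lemma map_sym_enc_learn: "map sym_of_bit (enc_learn d T S) =
   concat (replicate d [2,2]) @ 1 # 1 # concat (replicate T [2,2]) @ 1 # 1 # concat (map es S)"
proof -
  have e: "es (replicate n True) = concat (replicate n [2,2]) @ [1,1]" for n
    by (simp add: es_def body_rep_True)
  show ?thesis by (simp add: enc_learn_def enc_nat_def map_sym_enc_str map_concat e comp_def)
qed

lemma prep:
  assumes S: "\<forall>s\<in>set S. T \<le> length s"
    and N: "3 * (length (PreC d T 0) + length (concat (map es S)) + length (concat (map (\<lambda>s. emK s (length s) T) S)) + 1) + 8 \<le> N"
  shows "reach AA (tm_init (enc_learn d T S)) ((length S + 2) * (T + 1) * (3 * (N + 5) * (N + 5)))
     (cfg0 42 [] (es (replicate d True) @ concat (map (\<lambda>s. emK s (length s) T) S)))"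
proof -
  define Ss where "Ss = concat (map es S)"
  define OUT where "OUT = concat (map (\<lambda>s. emK s (length s) T) S)"
  define X where "X = concat (replicate d [2::nat, 2])"
  define gp where "gp = concat (replicate T [sU, sDn]) @ replicate (Suc (Suc (length Ss))) sDn @ [sHs]"
  have SsS: "set Ss \<subseteq> {1,2}" unfolding Ss_def by (auto simp: es_def dest: set_body')
  have OS: "set OUT \<subseteq> {1,2}"
  proof -
    have "set (emK s k u) \<subseteq> {1,2}" for s k u
      by (induction u arbitrary: k) (use set_body in \<open>fastforce simp: emitP_def es_def\<close>)+
    then show ?thesis unfolding OUT_def by auto
  qed
  have gpS: "set gp \<subseteq> {sU, sDn, sHs}" unfolding gp_def using set_concat_replicate[of T "[sU, sDn]"] by auto
  have "reach AA (tm_init (enc_learn d T S)) (2 * d + 2)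
      (cfg0 4 (sE # 1 # rev X @ []) (concat (replicate T [2,2]) @ 1 # 1 # Ss))"
    unfolding tm_init_cfg0 map_sym_enc_learn X_def Ss_def by (rule phD)
  also have "reach AA (cfg0 4 (sE # 1 # rev X @ []) (concat (replicate T [2,2]) @ 1 # 1 # Ss)) (2 * T + 2)
      (cfg0 7 (sDn # sDn # rev (concat (replicate T [sU, sDn])) @ sE # 1 # rev X @ []) Ss)"
    by (rule phC)
  also have "reach AA (cfg0 7 (sDn # sDn # rev (concat (replicate T [sU, sDn])) @ sE # 1 # rev X @ []) Ss) (2 * length Ss + 3)
      (cfg0 9 (sDn # sDn # rev (concat (replicate T [sU, sDn])) @ sE # 1 # rev X @ []) (Ss @ [sHs]))"
    by (rule phE[OF SsS])
  also have "cfg0 9 (sDn # sDn # rev (concat (replicate T [sU, sDn])) @ sE # 1 # rev X @ []) (Ss @ [sHs])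
     = cfg0 9 (rev (PreC d T 0)) (concat (map es S) @ sHs # [])"
    unfolding PreC_def DL_def X_def Ss_def by simp
  also have "reach AA (cfg0 9 (rev (PreC d T 0)) (concat (map es S) @ sHs # [])) (length S * ((T + 1) * (3 * (N + 5) * (N + 5))))
     (cfg0 9 (rev (PreC d T (0 + length (concat (map es S))))) (sHs # [] @ concat (map (\<lambda>s. emK s (length s) T) S)))"
    by (rule phSamples[OF S]) (use N in simp_all)
  also have "cfg0 9 (rev (PreC d T (0 + length (concat (map es S))))) (sHs # [] @ concat (map (\<lambda>s. emK s (length s) T) S))
     = cfg0 9 (rev (PreC d T (length Ss))) (sHs # OUT)"
    unfolding Ss_def OUT_def by simp
  also have "reach AA (cfg0 9 (rev (PreC d T (length Ss))) (sHs # OUT)) 1 (cfg0 36 (sHs # rev (PreC d T (length Ss))) OUT)"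
    by (rule a_stepR[OF _ t9_Hs]) simp_all
  also have "cfg0 36 (sHs # rev (PreC d T (length Ss))) OUT = cfg0 36 (rev gp @ sE # rev (DL d)) (OUT @ 0 # replicate 0 0)"
    unfolding gp_def PreC_def by (simp add: cfg0_R_zero)
  finally have r1: "reach AA (tm_init (enc_learn d T S))
    (2 * d + 2 + (2 * T + 2) + (2 * length Ss + 3) + length S * ((T + 1) * (3 * (N + 5) * (N + 5))) + 1)
    (cfg0 36 (rev gp @ sE # rev (DL d)) (OUT @ 0 # replicate 0 0))" .
  obtain z' where r2: "reach AA (cfg0 36 (rev gp @ sE # rev (DL d)) (OUT @ 0 # replicate 0 0)) (length gp * (2 * length OUT + 4))
     (cfg0 41 (rev (concat (replicate d [2,2]))) (1 # 1 # OUT @ replicate z' 0))"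
    using phClean[OF gpS _ OS, of d 0] unfolding gp_def by auto
  have r3: "reach AA (cfg0 41 (rev (concat (replicate d [2,2]))) (1 # 1 # OUT @ replicate z' 0)) (2 * d + 2)
     (cfg0 42 [] (es (replicate d True) @ OUT))"
    using phRew[of d "1 # OUT @ replicate z' 0"] cfg0_R_zeros[of 42 "[]" "es (replicate d True) @ OUT" z']
    by (simp add: es_def body_rep_True)
  have lens: "length (PreC d T 0) = 2 * d + 2 * T + 4" "length gp = 2 * T + length Ss + 3"
    unfolding gp_def by (simp_all add: length_PreC DL_def length_concat sum_list_replicate)
  have Nl: "2 * d + 2 * T + length Ss + length OUT + 5 \<le> N" "length gp \<le> N" "length OUT \<le> N"
    using N lens unfolding Ss_def OUT_def by simp_all
  have "length gp * (2 * length OUT + 4) \<le> N * (2 * N + 4)"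
    using Nl by (intro mult_mono) auto
  then have "2 * d + 2 + (2 * T + 2) + (2 * length Ss + 3) + 1 + length gp * (2 * length OUT + 4) + (2 * d + 2)
      \<le> 2 * (N * N) + 10 * N + 10" using Nl by (simp add: algebra_simps)
  also have "\<dots> \<le> 2 * (T + 1) * (3 * (N + 5) * (N + 5))"
  proof -
    have "2 * (N * N) + 10 * N + 10 \<le> 2 * (3 * (N + 5) * (N + 5))" by (simp add: algebra_simps)
    also have "\<dots> \<le> 2 * (T + 1) * (3 * (N + 5) * (N + 5))" by simp
    finally show ?thesis .
  qed
  finally have bnd: "2 * d + 2 + (2 * T + 2) + (2 * length Ss + 3) + length S * ((T + 1) * (3 * (N + 5) * (N + 5))) + 1
     + length gp * (2 * length OUT + 4) + (2 * d + 2) \<le> (length S + 2) * (T + 1) * (3 * (N + 5) * (N + 5))"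
    by (simp add: algebra_simps)
  show ?thesis using reach_trans[OF reach_trans[OF r1 r2] r3] bnd unfolding OUT_def by (rule reach_mono)
qed

end


lemma halted_stays: "fst c = 1 \<Longrightarrow> (tm_step X ^^ n) c = c"
proof (induction n)
  case (Suc n)
  obtain Q S \<delta> where X: "X = (Q, S, \<delta>)" by (cases X) auto
  obtain q tp p where c: "c = (q, tp, p)" by (cases c) auto
  have "tm_step X c = c" using Suc.prems unfolding X c tm_step_def by simp
  then show ?case using Suc by (simp only: funpow_Suc_right o_apply)
qed simp

context cotm begin

definition hc :: "config \<Rightarrow> config" where "hc c = (case c of (q, tp, p) \<Rightarrow> (hm q, tp, p))"
definition invM :: "config \<Rightarrow> bool" where "invM c = (case c of (q, tp, p) \<Rightarrow> q < QM \<and> (\<forall>i. tp i < SM))"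

lemma wfM': "\<forall>q<QM. \<forall>s<SM. case dM q s of (q', s', _) \<Rightarrow> q' < QM \<and> s' < SM"
  using wfM unfolding tm_wf_def by simp

lemma sim_step: assumes "invM c"
  shows "tm_step AA (hc c) = hc (tm_step (QM, SM, dM) c) \<and> invM (tm_step (QM, SM, dM) c)"
proof -
  obtain q tp p where c: "c = (q, tp, p)" by (cases c) auto
  have q: "q < QM" and tp: "\<forall>i. tp i < SM" using assms c by (auto simp: invM_def)
  show ?thesis
  proof (cases "q = 1")
    case True
    then show ?thesis using assms unfolding c hc_def tm_step_def hm_def by simp
  next
    case False
    obtain q' s' mv where e: "dM q (tp p) = (q', s', mv)" by (cases "dM q (tp p)") auto
    have tpp: "tp p < SM" using tp by simp
    have "case dM q (tp p) of (q', s', _) \<Rightarrow> q' < QM \<and> s' < SM" by (rule wfM'[rule_format, OF q tpp])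
    then have b: "q' < QM" "s' < SM" using e by auto
    have "dA (42 + q) (tp p) = (hm q', s', mv)" using q tpp e unfolding dA_def by simp
    moreover have "hm q \<noteq> 1" "hm q = 42 + q" using False by (auto simp: hm_def)
    ultimately show ?thesis using False b tp q e unfolding c hc_def tm_step_def invM_def by auto
  qed
qed

lemma sim_run: "invM c \<Longrightarrow> (tm_step AA ^^ n) (hc c) = hc ((tm_step (QM, SM, dM) ^^ n) c) \<and> invM ((tm_step (QM, SM, dM) ^^ n) c)"
proof (induction n arbitrary: c)
  case (Suc n)
  have s: "tm_step AA (hc c) = hc (tm_step (QM, SM, dM) c)" "invM (tm_step (QM, SM, dM) c)"
    using sim_step[OF Suc.prems] by auto
  have e1: "(tm_step AA ^^ Suc n) (hc c) = (tm_step AA ^^ n) (tm_step AA (hc c))"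
    by (simp only: funpow_Suc_right o_apply)
  have e2: "(tm_step (QM, SM, dM) ^^ Suc n) c = (tm_step (QM, SM, dM) ^^ n) (tm_step (QM, SM, dM) c)"
    by (simp only: funpow_Suc_right o_apply)
  show ?case unfolding e1 e2 s(1) by (rule Suc.IH[OF s(2)])
qed simp

lemma init_inv: "invM (tm_init x)"
  using QM2 SM3 unfolding invM_def tm_init_def sym_of_bit_def by auto

lemma hc_init: "hc (tm_init x) = cfg0 42 [] (map sym_of_bit x)"
  unfolding tm_init_cfg0 hc_def cfg0_def cfg_def hm_def by simp


primrec pK :: "bool list \<Rightarrow> nat \<Rightarrow> nat \<Rightarrow> (bool list \<times> bool) list" where
  "pK s k 0 = []"
| "pK s k (Suc u) = (take (k - 1) s, s ! (k - 1)) # pK s (k - 1) u"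

definition psS :: "nat \<Rightarrow> bool list list \<Rightarrow> (bool list \<times> bool) list" where
  "psS T S = concat (map (\<lambda>s. pK s (length s) T) S)"

lemma map_sym_pK: "map sym_of_bit (concat (map (\<lambda>(u, v). enc_str u @ enc_str [v]) (pK s k u))) = emK s k u"
  by (induction u arbitrary: k) (auto simp: map_sym_enc_str emitP_def)

lemma map_sym_enc_cons: "map sym_of_bit (enc_cons d (psS T S)) = es (replicate d True) @ concat (map (\<lambda>s. emK s (length s) T) S)"
proof -
  have "map sym_of_bit (concat (map (\<lambda>(u, v). enc_str u @ enc_str [v]) (psS T S))) = concat (map (\<lambda>s. emK s (length s) T) S)"
    unfolding psS_def by (induction S) (simp_all add: map_sym_pK[symmetric])
  then show ?thesis by (simp add: enc_cons_def enc_nat_def map_sym_enc_str)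
qed

lemma tm_main:
  assumes S: "\<forall>s\<in>set S. T \<le> length s"
    and N: "3 * (length (PreC d T 0) + length (concat (map es S)) + length (concat (map (\<lambda>s. emK s (length s) T) S)) + 1) + 8 \<le> N"
    and H: "tm_halts_within (QM, SM, dM) tM (enc_cons d (psS T S))"
    and t: "(length S + 2) * (T + 1) * (3 * (N + 5) * (N + 5)) + tM \<le> t"
  shows "tm_halts_within A t (enc_learn d T S) \<and>
         tm_output A t (enc_learn d T S) = tm_output (QM, SM, dM) tM (enc_cons d (psS T S))"
proof -
  let ?C = "enc_cons d (psS T S)"
  obtain t0 where t0: "t0 \<le> (length S + 2) * (T + 1) * (3 * (N + 5) * (N + 5))"
    "(tm_step AA ^^ t0) (tm_init (enc_learn d T S)) = hc (tm_init ?C)"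
    using prep[OF S N] unfolding reach_def hc_init map_sym_enc_cons by blast
  have r1: "(tm_step AA ^^ (tM + t0)) (tm_init (enc_learn d T S)) = hc (tm_run (QM, SM, dM) tM ?C)"
    using t0(2) sim_run[OF init_inv, of tM ?C] unfolding tm_run_def by (simp add: funpow_add)
  have h: "fst (hc (tm_run (QM, SM, dM) tM ?C)) = 1"
    using H unfolding tm_halts_within_def hc_def hm_def by (auto split: prod.splits)
  have "(tm_step AA ^^ t) (tm_init (enc_learn d T S)) = (tm_step AA ^^ (t - (tM + t0))) ((tm_step AA ^^ (tM + t0)) (tm_init (enc_learn d T S)))"
  proof -
    have "t = (t - (tM + t0)) + (tM + t0)" using t t0(1) by simp
    then show ?thesis by (metis funpow_add o_apply)
  qed
  also have "\<dots> = hc (tm_run (QM, SM, dM) tM ?C)" unfolding r1 by (rule halted_stays[OF h])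
  finally have r: "tm_run A t (enc_learn d T S) = hc (tm_run (QM, SM, dM) tM ?C)"
    unfolding tm_run_def A_def .
  show ?thesis using h unfolding tm_halts_within_def tm_output_def r
    by (auto simp: hc_def split: prod.splits)
qed

end

declare One_nat_def[simp]


definition shat :: "'a set set \<Rightarrow> 'a set \<Rightarrow> bool" where
  "shat H S \<longleftrightarrow> (\<forall>A\<subseteq>S. \<exists>h\<in>H. h \<inter> S = A)"

lemma pajor:
  assumes "finite Y" "H \<subseteq> Pow Y"
  shows "card H \<le> card {S. S \<subseteq> Y \<and> shat H S}"
  using assms
proof (induction Y arbitrary: H rule: finite_induct)
  case empty
  then have "H \<subseteq> {{}}" by auto
  then show ?case
  proof (cases "H = {}")
    case False
    then have "H = {{}}" using \<open>H \<subseteq> {{}}\<close> by auto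
    then have "{S. S \<subseteq> {} \<and> shat H S} = {{}}" by (auto simp: shat_def)
    then show ?thesis using \<open>H = {{}}\<close> by simp
  qed simp
next
  case (insert y Y)
  define H0 where "H0 = (\<lambda>h. h - {y}) ` H"
  define H1 where "H1 = {h. h \<subseteq> Y \<and> h \<in> H \<and> insert y h \<in> H}"
  define Ha where "Ha = {h\<in>H. y \<notin> h}"
  define Hb where "Hb = {h\<in>H. y \<in> h}"
  have finH: "finite H" using insert.prems insert.hyps(1) by (meson finite_Pow_iff finite_insert rev_finite_subset)
  have H0P: "H0 \<subseteq> Pow Y" using insert.prems unfolding H0_def by auto
  have H1P: "H1 \<subseteq> Pow Y" unfolding H1_def by auto
  have fins: "finite Ha" "finite Hb" using finH unfolding Ha_def Hb_def by auto
  have cH: "card H = card Ha + card Hb"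
  proof -
    have "H = Ha \<union> Hb" "Ha \<inter> Hb = {}" unfolding Ha_def Hb_def by auto
    then show ?thesis using card_Un_disjoint[OF fins] by simp
  qed
  define Hb' where "Hb' = (\<lambda>h. h - {y}) ` Hb"
  have inj: "inj_on (\<lambda>h. h - {y}) Hb"
  proof (rule inj_onI)
    fix a b assume ab: "a \<in> Hb" "b \<in> Hb" "a - {y} = b - {y}"
    then have "y \<in> a" "y \<in> b" by (auto simp: Hb_def)
    then show "a = b" using ab(3) by (metis insert_Diff)
  qed
  have cHb': "card Hb' = card Hb" unfolding Hb'_def by (rule card_image[OF inj])
  have H0eq: "H0 = Ha \<union> Hb'" unfolding H0_def Ha_def Hb'_def Hb_def by (auto simp: image_iff)
  have H1eq: "H1 = Ha \<inter> Hb'"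
  proof
    show "H1 \<subseteq> Ha \<inter> Hb'" unfolding H1_def Ha_def Hb'_def Hb_def using insert.hyps(2)
      by (auto intro!: image_eqI[where x="insert y _"])
    show "Ha \<inter> Hb' \<subseteq> H1"
    proof
      fix x assume x: "x \<in> Ha \<inter> Hb'"
      then have xH: "x \<in> H" "y \<notin> x" unfolding Ha_def by auto
      from x obtain h where h: "h \<in> H" "y \<in> h" "x = h - {y}" unfolding Hb'_def Hb_def by auto
      then have "insert y x = h" by auto
      moreover have "x \<subseteq> Y" using xH insert.prems by auto
      ultimately show "x \<in> H1" unfolding H1_def using xH h by auto
    qed
  qed
  have "card Ha + card Hb' = card (Ha \<union> Hb') + card (Ha \<inter> Hb')"
    by (rule card_Un_Int) (use fins in \<open>auto simp: Hb'_def\<close>)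
  then have cH01: "card H = card H0 + card H1" using cH cHb' H0eq H1eq by simp
  have IH0: "card H0 \<le> card {S. S \<subseteq> Y \<and> shat H0 S}" by (rule insert.IH[OF H0P])
  have IH1: "card H1 \<le> card {S. S \<subseteq> Y \<and> shat H1 S}" by (rule insert.IH[OF H1P])
  define R0 where "R0 = {S. S \<subseteq> Y \<and> shat H0 S}"
  define R1 where "R1 = insert y ` {S. S \<subseteq> Y \<and> shat H1 S}"
  have finY: "finite (Pow (insert y Y))" using insert.hyps(1) by simp
  have R0s: "R0 \<subseteq> {S. S \<subseteq> insert y Y \<and> shat H S}"
  proof
    fix S assume "S \<in> R0"
    then have S: "S \<subseteq> Y" "shat H0 S" unfolding R0_def by auto
    have "shat H S" unfolding shat_def
    proof (intro allI impI)
      fix A assume "A \<subseteq> S"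
      then obtain h0 where "h0 \<in> H0" "h0 \<inter> S = A" using S(2) unfolding shat_def by blast
      then obtain h where "h \<in> H" "h0 = h - {y}" unfolding H0_def by blast
      moreover have "y \<notin> S" using S(1) insert.hyps(2) by blast
      ultimately show "\<exists>h\<in>H. h \<inter> S = A" using \<open>h0 \<inter> S = A\<close> by blast
    qed
    then show "S \<in> {S. S \<subseteq> insert y Y \<and> shat H S}" using S by auto
  qed
  have R1s: "R1 \<subseteq> {S. S \<subseteq> insert y Y \<and> shat H S}"
  proof
    fix S' assume "S' \<in> R1"
    then obtain S where S: "S \<subseteq> Y" "shat H1 S" "S' = insert y S" unfolding R1_def by blast
    have yS: "y \<notin> S" using S(1) insert.hyps(2) by blast
    have "shat H (insert y S)" unfolding shat_def
    proof (intro allI impI)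
      fix A assume A: "A \<subseteq> insert y S"
      then have "A - {y} \<subseteq> S" by auto
      then obtain h1 where h1: "h1 \<in> H1" "h1 \<inter> S = A - {y}" using S(2) unfolding shat_def by blast
      have h1H: "h1 \<in> H" "insert y h1 \<in> H" "y \<notin> h1" using h1(1) insert.hyps(2) unfolding H1_def by auto
      show "\<exists>h\<in>H. h \<inter> insert y S = A"
      proof (cases "y \<in> A")
        case True
        then have "insert y h1 \<inter> insert y S = A" using h1(2) A by auto
        then show ?thesis using h1H by blast
      next
        case False
        then have "h1 \<inter> insert y S = A" using h1(2) h1H(3) A by auto
        then show ?thesis using h1H by blast
      qed
    qed
    then show "S' \<in> {S. S \<subseteq> insert y Y \<and> shat H S}" using S by auto
  qed
  have disj: "R0 \<inter> R1 = {}" unfolding R0_def R1_def using insert.hyps(2) by auto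
  have finA: "finite {S. S \<subseteq> insert y Y \<and> shat H S}"
    by (rule rev_finite_subset[OF finY]) auto
  have finR: "finite R0" "finite R1" using finite_subset[OF R0s finA] finite_subset[OF R1s finA] by auto
  have cR1: "card R1 = card {S. S \<subseteq> Y \<and> shat H1 S}"
    unfolding R1_def by (rule card_image) (use insert.hyps(2) in \<open>auto simp: inj_on_def\<close>)
  have "card H \<le> card R0 + card R1" using cH01 IH0 IH1 cR1 unfolding R0_def by simp
  also have "\<dots> = card (R0 \<union> R1)" using card_Un_disjoint[OF finR disj] by simp
  also have "\<dots> \<le> card {S. S \<subseteq> insert y Y \<and> shat H S}"
    by (rule card_mono[OF finA]) (use R0s R1s in auto)
  finally show ?case .
qed

lemma card_small_subsets:
  assumes "finite Y"
  shows "card {S. S \<subseteq> Y \<and> card S \<le> D} \<le> (card Y + 1) ^ D"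
proof -
  have "{S. S \<subseteq> Y \<and> card S \<le> D} = (\<Union>i\<le>D. {S. S \<subseteq> Y \<and> card S = i})" by auto
  then have "card {S. S \<subseteq> Y \<and> card S \<le> D} \<le> (\<Sum>i\<le>D. card {S. S \<subseteq> Y \<and> card S = i})"
    using card_UN_le[of "{..D}" "\<lambda>i. {S. S \<subseteq> Y \<and> card S = i}"] by simp
  also have "\<dots> = (\<Sum>i\<le>D. card Y choose i)" using n_subsets[OF assms] by simp
  also have "\<dots> \<le> (\<Sum>i\<le>D. (D choose i) * card Y ^ i)"
  proof (rule sum_mono)
    fix i assume i: "i \<in> {..D}"
    have "card Y choose i \<le> card Y ^ i"
      by (cases "i \<le> card Y") (auto intro: binomial_le_pow simp: binomial_eq_0)
    also have "\<dots> \<le> (D choose i) * card Y ^ i" using i by (simp add: Suc_leI)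
    finally show "card Y choose i \<le> (D choose i) * card Y ^ i" .
  qed
  also have "\<dots> = (card Y + 1) ^ D"
  proof -
    have "(card Y + 1) ^ D = (\<Sum>k\<le>D. of_nat (D choose k) * card Y ^ k * 1 ^ (D - k))"
      by (rule binomial_ring)
    then show ?thesis by simp
  qed
  finally show ?thesis .
qed


lemma set_iid: "set_pmf (iid_pmf D m) \<subseteq> {xs. length xs = m \<and> set xs \<subseteq> set_pmf D}"
  by (induction m) fastforce+

lemma emeasure_iid_all: "emeasure (measure_pmf (iid_pmf D m)) {xs. \<forall>x\<in>set xs. P x} = emeasure (measure_pmf D) {x. P x} ^ m"
proof (induction m)
  case 0 then show ?case by simp
next
  case (Suc m)
  let ?A = "{xs. \<forall>x\<in>set xs. P x}"
  have "emeasure (measure_pmf (iid_pmf D (Suc m))) ?A =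
      (\<integral>\<^sup>+x. emeasure (measure_pmf (iid_pmf D m)) ((\<lambda>xs. x # xs) -` ?A) \<partial>measure_pmf D)"
    by simp
  also have "\<dots> = (\<integral>\<^sup>+x. emeasure (measure_pmf (iid_pmf D m)) ?A * indicator {x. P x} x \<partial>measure_pmf D)"
    by (rule nn_integral_cong) (auto simp: indicator_def vimage_def)
  also have "\<dots> = emeasure (measure_pmf (iid_pmf D m)) ?A * emeasure (measure_pmf D) {x. P x}"
    by (rule nn_integral_cmult_indicator) simp
  finally show ?case using Suc by (simp add: mult.commute)
qed

lemma prob_iid_all: "measure_pmf.prob (iid_pmf D m) {xs. \<forall>x\<in>set xs. P x} = measure_pmf.prob D {x. P x} ^ m"
proof -
  have "ennreal (measure_pmf.prob (iid_pmf D m) {xs. \<forall>x\<in>set xs. P x}) = ennreal (measure_pmf.prob D {x. P x} ^ m)"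
    using emeasure_iid_all[of D m P]
    by (simp add: measure_pmf.emeasure_eq_measure ennreal_power)
  then show ?thesis by (simp add: ennreal_inj)
qed


lemma cot_0[simp]: "cot f 0 x = x" by (simp add: cot_def)

lemma cot_Suc: "cot f (Suc j) x = cot f j x @ [f (cot f j x)]"
  by (simp add: cot_def cot_step_def)

lemma length_cot[simp]: "length (cot f j x) = length x + j"
  by (induction j) (auto simp: cot_Suc)

lemma take_cot: "j \<le> T \<Longrightarrow> take (length x + j) (cot f T x) = cot f j x"
proof (induction T)
  case (Suc T)
  show ?case
  proof (cases "j = Suc T")
    case False
    then have "j \<le> T" using Suc.prems by simp
    then show ?thesis using Suc.IH by (simp add: cot_Suc)
  qed (simp add: cot_Suc)
qed simp

lemma nth_cot: "j < T \<Longrightarrow> cot f T x ! (length x + j) = f (cot f j x)"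
proof (induction T)
  case (Suc T)
  show ?case
  proof (cases "j = T")
    case True then show ?thesis by (simp add: cot_Suc nth_append)
  next
    case False
    then show ?thesis using Suc by (simp add: cot_Suc nth_append)
  qed
qed simp

lemma cot_agree: "(\<And>y. length y < length x + T \<Longrightarrow> g y = g' y) \<Longrightarrow> j \<le> T \<Longrightarrow> cot g j x = cot g' j x"
  by (induction j) (auto simp: cot_Suc)

lemma e2e_agree: "(\<And>y. length y < length x + T \<Longrightarrow> g y = g' y) \<Longrightarrow> e2e g T x = e2e g' T x"
  unfolding e2e_def using cot_agree[of x T g g' T] by simp

lemma card_short_lists: "card {y::bool list. length y < k} + 1 \<le> 2 ^ k"
proof (induction k)
  case 0 then show ?case by simp
next
  case (Suc k)
  have e: "{y::bool list. length y < Suc k} = {y. length y < k} \<union> {y. length y = k}" by auto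
  have f1: "finite {y::bool list. length y < k}"
    by (rule rev_finite_subset[OF finite_lists_length_le[of "UNIV :: bool set" k]]) auto
  have f2: "finite {y::bool list. length y = k}"
    by (rule rev_finite_subset[OF finite_lists_length_le[of "UNIV :: bool set" k]]) auto
  have c2: "card {y::bool list. length y = k} = 2 ^ k"
    using card_lists_length_eq[of "UNIV :: bool set" k] by simp
  have "card {y::bool list. length y < Suc k} \<le> card {y::bool list. length y < k} + card {y::bool list. length y = k}"
    unfolding e by (rule card_Un_le)
  then show ?case using Suc c2 by simp
qed

lemma finite_short_lists: "finite {y::bool list. length y < k}"
  by (rule rev_finite_subset[OF finite_lists_length_le[of "UNIV :: bool set" k]]) auto


lemma two_pow_le_exp: "(2::real) ^ K \<le> exp (real K)"
proof -
  have "(2::real) \<le> exp 1" using exp_ge_add_one_self[of 1] by simp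
  then have "(2::real) ^ K \<le> exp 1 ^ K" by (rule power_mono) simp
  also have "\<dots> = exp (real K)" by (simp add: exp_of_nat_mult[symmetric])
  finally show ?thesis .
qed

lemma stat:
  fixes D :: "bool list pmf" and F :: "(bool list \<Rightarrow> bool) set"
  assumes VC: "\<And>S. finite S \<Longrightarrow> shatters F S \<Longrightarrow> card S \<le> V"
    and supp: "set_pmf D \<subseteq> {x. length x \<le> n}" and eps: "0 < \<epsilon>" "\<epsilon> < 1" and del: "0 < \<delta>"
    and m: "(real (n + T + 1) * real V + ln (1 / \<delta>)) / \<epsilon> \<le> real m"
  shows "measure_pmf.prob (iid_pmf D m) {xs. \<exists>g\<in>F. (\<forall>x\<in>set xs. e2e g T x = e2e f T x) \<and>
            \<epsilon> < measure_pmf.prob D {x. e2e g T x \<noteq> e2e f T x}} \<le> \<delta>"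
proof -
  define Y where "Y = {y::bool list. length y < n + T}"
  define restr where "restr g = {y\<in>Y. g y}" for g :: "bool list \<Rightarrow> bool"
  define beh where "beh g = (\<lambda>x. if length x \<le> n then e2e g T x else False)" for g
  define err where "err \<beta> = measure_pmf.prob D {x. \<beta> x \<noteq> e2e f T x}" for \<beta>
  define Bh where "Bh = beh ` F"
  define Bbad where "Bbad = {\<beta>\<in>Bh. \<epsilon> < err \<beta>}"
  define E where "E \<beta> = {xs. \<forall>x\<in>set xs. length x \<le> n \<longrightarrow> \<beta> x = e2e f T x}" for \<beta>
  define Bad where "Bad = {xs. \<exists>g\<in>F. (\<forall>x\<in>set xs. e2e g T x = e2e f T x) \<and>
            \<epsilon> < measure_pmf.prob D {x. e2e g T x \<noteq> e2e f T x}}"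
  have finY: "finite Y" unfolding Y_def by (rule finite_short_lists)
  have cY: "card Y + 1 \<le> 2 ^ (n + T)" unfolding Y_def by (rule card_short_lists)
  have beh_restr: "beh g = beh (\<lambda>y. y \<in> restr g)" for g
  proof
    fix x show "beh g x = beh (\<lambda>y. y \<in> restr g) x"
    proof (cases "length x \<le> n")
      case True
      have "e2e g T x = e2e (\<lambda>y. y \<in> restr g) T x"
        by (rule e2e_agree) (use True in \<open>auto simp: restr_def Y_def\<close>)
      then show ?thesis unfolding beh_def by simp
    qed (simp add: beh_def)
  qed
  have Bh_eq: "Bh = (\<lambda>Z. beh (\<lambda>y. y \<in> Z)) ` (restr ` F)"
    unfolding Bh_def image_comp comp_def using beh_restr by (auto simp: image_iff)
  have RP: "restr ` F \<subseteq> Pow Y" unfolding restr_def by auto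
  have finR: "finite (restr ` F)" using finY RP by (meson finite_Pow_iff rev_finite_subset)
  have shat_sh: "shatters F S" if SS: "S \<subseteq> Y" "shat (restr ` F) S" for S
    unfolding shatters_def
  proof
    fix g :: "bool list \<Rightarrow> bool"
    have "{x\<in>S. g x} \<subseteq> S" by auto
    from SS(2)[unfolded shat_def, rule_format, OF this]
    obtain h where h: "h \<in> restr ` F" "h \<inter> S = {x\<in>S. g x}" by blast
    then obtain f' where f': "f' \<in> F" "h = restr f'" by blast
    have "\<forall>x\<in>S. f' x = g x"
    proof
      fix x assume x: "x \<in> S"
      then have "x \<in> Y" using SS(1) by blast
      then have "f' x \<longleftrightarrow> x \<in> h \<inter> S" using x f'(2) unfolding restr_def by auto
      then show "f' x = g x" using h(2) x by auto
    qed
    then show "\<exists>f\<in>F. \<forall>x\<in>S. f x = g x" using f'(1) by blast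
  qed
  have "card Bh \<le> card (restr ` F)" unfolding Bh_eq by (rule card_image_le[OF finR])
  also have "\<dots> \<le> card {S. S \<subseteq> Y \<and> shat (restr ` F) S}" by (rule pajor[OF finY RP])
  also have "\<dots> \<le> card {S. S \<subseteq> Y \<and> card S \<le> V}"
  proof (rule card_mono)
    show "finite {S. S \<subseteq> Y \<and> card S \<le> V}" using finY by simp
    show "{S. S \<subseteq> Y \<and> shat (restr ` F) S} \<subseteq> {S. S \<subseteq> Y \<and> card S \<le> V}"
      using VC shat_sh finY by (auto intro: rev_finite_subset)
  qed
  also have "\<dots> \<le> (card Y + 1) ^ V" by (rule card_small_subsets[OF finY])
  also have "\<dots> \<le> (2 ^ (n + T)) ^ V" by (rule power_mono[OF cY]) simp
  finally have cBh: "card Bh \<le> 2 ^ ((n + T) * V)" by (simp add: power_mult)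
  have finBh: "finite Bh" unfolding Bh_eq using finR by simp
  have finBbad: "finite Bbad" using finBh unfolding Bbad_def by simp
  have err_beh: "err (beh g) = measure_pmf.prob D {x. e2e g T x \<noteq> e2e f T x}" for g
  proof -
    have "{x. beh g x \<noteq> e2e f T x} \<inter> set_pmf D = {x. e2e g T x \<noteq> e2e f T x} \<inter> set_pmf D"
      using supp unfolding beh_def by auto
    then show ?thesis unfolding err_def by (metis measure_Int_set_pmf)
  qed
  have BadE: "Bad \<subseteq> (\<Union>\<beta>\<in>Bbad. E \<beta>)"
  proof
    fix xs assume "xs \<in> Bad"
    then obtain g where g: "g \<in> F" "\<forall>x\<in>set xs. e2e g T x = e2e f T x"
      "\<epsilon> < measure_pmf.prob D {x. e2e g T x \<noteq> e2e f T x}" unfolding Bad_def by blast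
    have "beh g \<in> Bbad" unfolding Bbad_def Bh_def using g err_beh by auto
    moreover have "xs \<in> E (beh g)" unfolding E_def beh_def using g(2) by auto
    ultimately show "xs \<in> (\<Union>\<beta>\<in>Bbad. E \<beta>)" by blast
  qed
  have PE: "measure_pmf.prob (iid_pmf D m) (E \<beta>) \<le> (1 - \<epsilon>) ^ m" if "\<beta> \<in> Bbad" for \<beta>
  proof -
    have "measure_pmf.prob (iid_pmf D m) (E \<beta>) = measure_pmf.prob D {x. length x \<le> n \<longrightarrow> \<beta> x = e2e f T x} ^ m"
      unfolding E_def by (rule prob_iid_all)
    also have "measure_pmf.prob D {x. length x \<le> n \<longrightarrow> \<beta> x = e2e f T x} = 1 - err \<beta>"
    proof -
      have "measure_pmf.prob D {x. length x \<le> n \<longrightarrow> \<beta> x = e2e f T x} = 1 - measure_pmf.prob D {x. length x \<le> n \<and> \<beta> x \<noteq> e2e f T x}"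
        using measure_pmf.prob_compl[of "{x. length x \<le> n \<and> \<beta> x \<noteq> e2e f T x}" D]
        by (simp add: Compl_eq_Diff_UNIV[symmetric] Collect_neg_eq[symmetric])
      also have "measure_pmf.prob D {x. length x \<le> n \<and> \<beta> x \<noteq> e2e f T x} = err \<beta>"
      proof -
        have "{x. length x \<le> n \<and> \<beta> x \<noteq> e2e f T x} \<inter> set_pmf D = {x. \<beta> x \<noteq> e2e f T x} \<inter> set_pmf D"
          using supp by auto
        then show ?thesis unfolding err_def by (metis measure_Int_set_pmf)
      qed
      finally show ?thesis .
    qed
    also have "(1 - err \<beta>) ^ m \<le> (1 - \<epsilon>) ^ m"
    proof (rule power_mono)
      show "1 - err \<beta> \<le> 1 - \<epsilon>" using that unfolding Bbad_def by simp
      show "0 \<le> 1 - err \<beta>" unfolding err_def by simp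
    qed
    finally show ?thesis .
  qed
  have "measure_pmf.prob (iid_pmf D m) Bad \<le> measure_pmf.prob (iid_pmf D m) (\<Union>\<beta>\<in>Bbad. E \<beta>)"
    by (rule measure_pmf.finite_measure_mono[OF BadE]) simp
  also have "\<dots> \<le> (\<Sum>\<beta>\<in>Bbad. measure_pmf.prob (iid_pmf D m) (E \<beta>))"
    by (rule measure_pmf.finite_measure_subadditive_finite[OF finBbad]) simp
  also have "\<dots> \<le> (\<Sum>\<beta>\<in>Bbad. (1 - \<epsilon>) ^ m)" by (rule sum_mono[OF PE])
  also have "\<dots> = real (card Bbad) * (1 - \<epsilon>) ^ m" by simp
  also have "\<dots> \<le> real (card Bh) * (1 - \<epsilon>) ^ m"
  proof (rule mult_right_mono)
    show "real (card Bbad) \<le> real (card Bh)" using card_mono[OF finBh] unfolding Bbad_def by auto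
    show "0 \<le> (1 - \<epsilon>) ^ m" using eps by simp
  qed
  also have "\<dots> \<le> exp (real ((n + T) * V)) * exp (- \<epsilon> * real m)"
  proof (rule mult_mono)
    have "real (card Bh) \<le> 2 ^ ((n + T) * V)" using cBh by (metis of_nat_le_iff of_nat_numeral of_nat_power)
    then show "real (card Bh) \<le> exp (real ((n + T) * V))" using two_pow_le_exp order_trans by blast
    have "1 - \<epsilon> \<le> exp (- \<epsilon>)" using exp_ge_add_one_self[of "- \<epsilon>"] by simp
    then have "(1 - \<epsilon>) ^ m \<le> exp (- \<epsilon>) ^ m" by (rule power_mono) (use eps in simp)
    then show "(1 - \<epsilon>) ^ m \<le> exp (- \<epsilon> * real m)" by (simp add: exp_of_nat_mult[symmetric] mult.commute)
  qed (use eps in simp_all)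
  also have "\<dots> = exp (real ((n + T) * V) - \<epsilon> * real m)" by (simp add: exp_add[symmetric])
  also have "\<dots> \<le> exp (ln \<delta>)"
  proof -
    have "real (n + T + 1) * real V + ln (1 / \<delta>) \<le> \<epsilon> * real m"
      using m eps by (simp add: field_simps)
    moreover have "real ((n + T) * V) \<le> real (n + T + 1) * real V"
      by (simp only: of_nat_mult[symmetric] of_nat_le_iff) (rule mult_right_mono, simp_all)
    moreover have "ln (1 / \<delta>) = - ln \<delta>" using del by (simp add: ln_div)
    ultimately show ?thesis by simp
  qed
  also have "\<dots> = \<delta>" using del by simp
  finally show ?thesis unfolding Bad_def .
qed


declare One_nat_def[simp del]


lemma vc_card: assumes "vcdim F \<le> enat V" "finite S" "shatters F S" shows "card S \<le> V"
proof -
  have "enat (card S) \<le> vcdim F" unfolding vcdim_def using assms(2,3) by (auto intro!: Sup_upper)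
  then have "enat (card S) \<le> enat V" using assms(1) order_trans by blast
  then show ?thesis by simp
qed

context cotm begin

lemma set_pK: "(a, b) \<in> set (pK s k u) \<longleftrightarrow> (\<exists>i<u. a = take (k - Suc i) s \<and> b = s ! (k - Suc i))"
proof (induction u arbitrary: k)
  case 0 then show ?case by simp
next
  case (Suc u)
  show ?case
  proof
    assume "(a, b) \<in> set (pK s k (Suc u))"
    then consider "a = take (k - 1) s \<and> b = s ! (k - 1)" | "(a, b) \<in> set (pK s (k - 1) u)" by auto
    then show "\<exists>i<Suc u. a = take (k - Suc i) s \<and> b = s ! (k - Suc i)"
    proof cases
      case 1 then show ?thesis by (intro exI[of _ 0]) (simp add: One_nat_def)
    next
      case 2
      then obtain i where "i < u" "a = take (k - 1 - Suc i) s \<and> b = s ! (k - 1 - Suc i)" using Suc.IH by blast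
      then show ?thesis by (intro exI[of _ "Suc i"]) (simp add: One_nat_def)
    qed
  next
    assume "\<exists>i<Suc u. a = take (k - Suc i) s \<and> b = s ! (k - Suc i)"
    then obtain i where i: "i < Suc u" "a = take (k - Suc i) s" "b = s ! (k - Suc i)" by blast
    show "(a, b) \<in> set (pK s k (Suc u))"
    proof (cases i)
      case 0 then show ?thesis using i by (simp add: One_nat_def)
    next
      case (Suc i')
      have e: "k - 1 - Suc i' = k - Suc i" using Suc by arith
      have "\<exists>i<u. a = take (k - 1 - Suc i) s \<and> b = s ! (k - 1 - Suc i)"
        using i Suc e by (intro exI[of _ i']) simp
      then have "(a, b) \<in> set (pK s (k - 1) u)" using Suc.IH by blast
      then show ?thesis by simp
    qed
  qed
qed

lemma pairs_cot: "(a, b) \<in> set (pK (cot f T x) (length (cot f T x)) T) \<longleftrightarrow> (\<exists>j<T. a = cot f j x \<and> b = f (cot f j x))"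
proof -
  have "(\<exists>i<T. a = take (length x + T - Suc i) (cot f T x) \<and> b = cot f T x ! (length x + T - Suc i))
      \<longleftrightarrow> (\<exists>j<T. a = cot f j x \<and> b = f (cot f j x))"
  proof
    assume "\<exists>i<T. a = take (length x + T - Suc i) (cot f T x) \<and> b = cot f T x ! (length x + T - Suc i)"
    then obtain i where i: "i < T" "a = take (length x + T - Suc i) (cot f T x)" "b = cot f T x ! (length x + T - Suc i)" by blast
    define j where "j = T - Suc i"
    have j: "j < T" "length x + T - Suc i = length x + j" using i(1) unfolding j_def by auto
    show "\<exists>j<T. a = cot f j x \<and> b = f (cot f j x)"
      using i j take_cot[of j T x f] nth_cot[of j T f x] by (intro exI[of _ j]) simp
  next
    assume "\<exists>j<T. a = cot f j x \<and> b = f (cot f j x)"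
    then obtain j where j: "j < T" "a = cot f j x" "b = f (cot f j x)" by blast
    define i where "i = T - Suc j"
    have i: "i < T" "length x + T - Suc i = length x + j" using j(1) unfolding i_def by auto
    show "\<exists>i<T. a = take (length x + T - Suc i) (cot f T x) \<and> b = cot f T x ! (length x + T - Suc i)"
      using i j take_cot[of j T x f] nth_cot[of j T f x] by (intro exI[of _ i]) simp
  qed
  then show ?thesis using set_pK by simp
qed

lemma set_psS: "p \<in> set (psS T (map (cot f T) xs)) \<longleftrightarrow> (\<exists>x\<in>set xs. \<exists>j<T. p = (cot f j x, f (cot f j x)))"
  unfolding psS_def using pairs_cot by (cases p) auto

lemma f_consistent: "\<forall>(a, b)\<in>set (psS T (map (cot f T) xs)). f a = b"
  using set_psS by fastforce

lemma h_consistent: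
  assumes "\<forall>(a, b)\<in>set (psS T (map (cot f T) xs)). h a = b" "x \<in> set xs"
  shows "e2e h T x = e2e f T x"
proof -
  have hj: "h (cot f j x) = f (cot f j x)" if "j < T" for j
    using assms set_psS[of "(cot f j x, f (cot f j x))" T f xs] that by fastforce
  have "cot h j x = cot f j x" if "j \<le> T" for j
    using that by (induction j) (auto simp: cot_Suc hj)
  then show ?thesis unfolding e2e_def by simp
qed

lemma len_emitP: "length (emitP s k) \<le> 2 * length s + 6"
  by (simp add: emitP_def)

lemma len_emK: "length (emK s k u) \<le> u * (2 * length s + 6)"
proof (induction u arbitrary: k)
  case (Suc u)
  have "length (emK s k (Suc u)) = length (emitP s (k - 1)) + length (emK s (k - 1) u)" by simp
  also have "\<dots> \<le> (2 * length s + 6) + u * (2 * length s + 6)" using len_emitP Suc.IH add_mono by blast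
  finally show ?case by simp
qed simp

lemma len_concat_le: "(\<forall>s\<in>set S. length (g s) \<le> b) \<Longrightarrow> length (concat (map g S)) \<le> length S * b"
  by (induction S) auto

lemma len_bound:
  assumes "\<forall>s\<in>set S. length s \<le> n + T"
  shows "3 * (length (PreC d T 0) + length (concat (map es S)) + length (concat (map (\<lambda>s. emK s (length s) T) S)) + 1) + 8
         \<le> 3 * (2 * d + 2 * T + 5 + length S * (T + 1) * (2 * (n + T) + 6)) + 8"
    and "length (enc_cons d (psS T S)) \<le> 3 * (2 * d + 2 * T + 5 + length S * (T + 1) * (2 * (n + T) + 6)) + 8"
proof -
  have a: "length (concat (map es S)) \<le> length S * (2 * (n + T) + 2)"
    by (rule len_concat_le) (use assms in auto)
  have b: "length (concat (map (\<lambda>s. emK s (length s) T) S)) \<le> length S * (T * (2 * (n + T) + 6))"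
  proof (rule len_concat_le, intro ballI)
    fix s assume "s \<in> set S"
    then have "length (emK s (length s) T) \<le> T * (2 * length s + 6)" using len_emK by blast
    also have "\<dots> \<le> T * (2 * (n + T) + 6)" using assms \<open>s \<in> set S\<close> by (intro mult_left_mono) auto
    finally show "length (emK s (length s) T) \<le> T * (2 * (n + T) + 6)" .
  qed
  have c: "length (PreC d T 0) = 2 * d + 2 * T + 4" by (simp add: length_PreC DL_def length_concat sum_list_replicate)
  have "length S * (2 * (n + T) + 2) + length S * (T * (2 * (n + T) + 6)) \<le> length S * (T + 1) * (2 * (n + T) + 6)"
    by (simp add: algebra_simps)
  then show "3 * (length (PreC d T 0) + length (concat (map es S)) + length (concat (map (\<lambda>s. emK s (length s) T) S)) + 1) + 8
         \<le> 3 * (2 * d + 2 * T + 5 + length S * (T + 1) * (2 * (n + T) + 6)) + 8" using a b c by simp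
  have "length (enc_cons d (psS T S)) = length (map sym_of_bit (enc_cons d (psS T S)))" by simp
  also have "\<dots> = 2 * d + 2 + length (concat (map (\<lambda>s. emK s (length s) T) S))"
    unfolding map_sym_enc_cons by simp
  finally show "length (enc_cons d (psS T S)) \<le> 3 * (2 * d + 2 * T + 5 + length S * (T + 1) * (2 * (n + T) + 6)) + 8"
    using b \<open>length S * (2 * (n + T) + 2) + length S * (T * (2 * (n + T) + 6)) \<le> length S * (T + 1) * (2 * (n + T) + 6)\<close>
    by simp
qed

end


context cotm begin

lemma learner:
  assumes Mprop: "\<forall>d ps. (\<exists>f\<in>F d. \<forall>(u, v)\<in>set ps. f u = v) \<longrightarrow>
        (let inp = enc_cons d ps; t = cM * (length inp + d + 1) ^ kM; r = tm_output (QM, SM, dM) t inp in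
          tm_halts_within (QM, SM, dM) t inp \<and> rep d r \<in> F d \<and> (\<forall>(u, v)\<in>set ps. rep d r u = v))"
    and f: "f \<in> F d" and xs: "\<forall>x\<in>set xs. length x \<le> n"
    and N: "N = 3 * (2 * d + 2 * T + 5 + length xs * (T + 1) * (2 * (n + T) + 6)) + 8"
    and t: "(length xs + 2) * (T + 1) * (3 * (N + 5) * (N + 5)) + cM * (N + d + 1) ^ kM \<le> t"
  shows "tm_halts_within A t (enc_learn d T (map (cot f T) xs)) \<and>
         rep d (tm_output A t (enc_learn d T (map (cot f T) xs))) \<in> F d \<and>
         (\<forall>x\<in>set xs. e2e (rep d (tm_output A t (enc_learn d T (map (cot f T) xs)))) T x = e2e f T x)"
proof -
  define S where "S = map (cot f T) xs"
  define ps where "ps = psS T S"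
  define inp where "inp = enc_cons d ps"
  define tM where "tM = cM * (length inp + d + 1) ^ kM"
  define r where "r = tm_output (QM, SM, dM) tM inp"
  have ex: "\<exists>f\<in>F d. \<forall>(u, v)\<in>set ps. f u = v" using f f_consistent[of T f xs] unfolding ps_def S_def by blast
  have "let inp = enc_cons d ps; t = cM * (length inp + d + 1) ^ kM; r = tm_output (QM, SM, dM) t inp in
          tm_halts_within (QM, SM, dM) t inp \<and> rep d r \<in> F d \<and> (\<forall>(u, v)\<in>set ps. rep d r u = v)"
    using Mprop ex by blast
  then have M: "tm_halts_within (QM, SM, dM) tM inp" "rep d r \<in> F d" "\<forall>(u, v)\<in>set ps. rep d r u = v"
    unfolding inp_def tM_def r_def Let_def by simp_all
  have Sl: "\<forall>s\<in>set S. length s \<le> n + T" "\<forall>s\<in>set S. T \<le> length s" using xs unfolding S_def by auto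
  have lS: "length S = length xs" unfolding S_def by simp
  have Nb: "3 * (length (PreC d T 0) + length (concat (map es S)) + length (concat (map (\<lambda>s. emK s (length s) T) S)) + 1) + 8 \<le> N"
    using len_bound(1)[OF Sl(1), of d] unfolding N lS .
  have li: "length inp \<le> N" using len_bound(2)[OF Sl(1), of d] unfolding N lS inp_def ps_def .
  have "tM \<le> cM * (N + d + 1) ^ kM" unfolding tM_def using li by (intro mult_left_mono power_mono) auto
  then have tt: "(length S + 2) * (T + 1) * (3 * (N + 5) * (N + 5)) + tM \<le> t" using t lS by simp
  have main: "tm_halts_within A t (enc_learn d T S) \<and> tm_output A t (enc_learn d T S) = r"
    using tm_main[OF Sl(2) Nb M(1)[unfolded inp_def ps_def] tt] unfolding r_def inp_def ps_def by simp
  have "\<forall>x\<in>set xs. e2e (rep d r) T x = e2e f T x"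
    using h_consistent[of T f xs "rep d r"] M(3) unfolding ps_def S_def by blast
  then show ?thesis using main M(2) unfolding S_def by simp
qed

end

lemma lp_mult: "0 \<le> a \<Longrightarrow> 0 \<le> b \<Longrightarrow> a \<le> (Z::real) ^ e1 \<Longrightarrow> b \<le> Z ^ e2 \<Longrightarrow> a * b \<le> Z ^ (e1 + e2)"
  by (simp add: mult_mono power_add)

lemma lp_mono: "1 \<le> (Z::real) \<Longrightarrow> a \<le> Z ^ e \<Longrightarrow> e \<le> e' \<Longrightarrow> a \<le> Z ^ e'"
  by (meson order_trans power_increasing)

lemma lp_add: "2 \<le> (Z::real) \<Longrightarrow> a \<le> Z ^ e \<Longrightarrow> b \<le> Z ^ e \<Longrightarrow> a + b \<le> Z ^ Suc e"
proof -
  assume "2 \<le> Z" "a \<le> Z ^ e" "b \<le> Z ^ e"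
  then have "a + b \<le> 2 * Z ^ e" by simp
  also have "\<dots> \<le> Z * Z ^ e" using \<open>2 \<le> Z\<close> by (intro mult_right_mono) auto
  finally show ?thesis by simp
qed

lemma lp_pow: "0 \<le> a \<Longrightarrow> a \<le> (Z::real) ^ e \<Longrightarrow> a ^ k \<le> Z ^ (e * k)"
  by (metis power_mono power_mult)


lemma real_nat_ceiling_le: "0 \<le> q \<Longrightarrow> real (nat \<lceil>q\<rceil>) \<le> q + 1"
proof -
  assume q: "0 \<le> q"
  then have "real (nat \<lceil>q\<rceil>) = real_of_int \<lceil>q\<rceil>" by simp
  also have "\<dots> \<le> q + 1" by linarith
  finally show ?thesis .
qed

lemma real_nat_ceiling_ge: "q \<le> real (nat \<lceil>q\<rceil>)"
  by linarith

lemma poly_bound: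
  fixes n d T cV cM kV kM :: nat and \<epsilon> \<delta> :: real
  assumes eps: "0 < \<epsilon>" "\<epsilon> < 1" and del: "0 < \<delta>" "\<delta> < 1"
  defines "X \<equiv> real n + real d + real T + 1 / \<epsilon> + ln (1 / \<delta>) + 1"
  defines "B \<equiv> real cV + real cM + 1000"
  defines "mm \<equiv> nat \<lceil>(real (n + T + 1) * real (cV * (d + 1) ^ kV) + ln (1 / \<delta>)) / \<epsilon>\<rceil>"
  defines "N \<equiv> 3 * (2 * d + 2 * T + 5 + mm * (T + 1) * (2 * (n + T) + 6)) + 8"
  defines "K \<equiv> max (kV + 5 + 2 * (kV + 11 + 1) + 5) ((kV + 11 + 1) * kM + 1)"
  shows "real ((mm + 2) * (T + 1) * (3 * (N + 5) * (N + 5)) + cM * (N + d + 1) ^ kM) \<le> B ^ Suc K * X ^ Suc K"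
proof -
  define Z where "Z = B * X"
  define e1 where "e1 = kV + 5"
  define e2 where "e2 = e1 + 6"
  have il: "1 < 1 / \<epsilon>" using eps by simp
  have lp: "0 < ln (1 / \<delta>)" using del by simp
  have bX: "real n + real T + 1 \<le> X" "real d + 1 \<le> X" "real T + 1 \<le> X" "1 / \<epsilon> \<le> X" "ln (1 / \<delta>) \<le> X"
    "real n + real d + real T + 1 \<le> X" "1 \<le> X" "0 \<le> X"
    unfolding X_def using il lp by simp_all
  have B1: "1000 \<le> B" "0 \<le> B" unfolding B_def by simp_all
  have BZ: "B \<le> Z" unfolding Z_def using B1 bX(7) by (simp add: mult_le_cancel_left1)
  have XZ: "X \<le> Z" unfolding Z_def using B1 bX(7,8) by (simp add: mult_le_cancel_right1)
  have Z1: "1000 \<le> Z" using B1 BZ by linarith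
  have Z2: "2 \<le> Z" "1 \<le> Z" "0 \<le> Z" using Z1 by simp_all
  have cZ: "real cV \<le> Z" "real cM \<le> Z" using BZ unfolding B_def by linarith+
  have p1: "a \<le> Z ^ 1" if "a \<le> Z" for a using that by simp
  have const: "a \<le> Z ^ e" if "a \<le> 1000" "1 \<le> e" for a e
    using lp_mono[OF Z2(2) p1[of a] that(2)] that Z1 by simp
  have V: "real (cV * (d + 1) ^ kV) \<le> Z ^ (1 + kV)"
  proof -
    have "(real d + 1) ^ kV \<le> Z ^ (1 * kV)" by (rule lp_pow) (use bX XZ in auto)
    then show ?thesis using lp_mult[OF _ _ p1[OF cZ(1)], of "(real d + 1) ^ kV" kV] by simp
  qed
  have q1: "real (n + T + 1) * real (cV * (d + 1) ^ kV) \<le> Z ^ (1 + (1 + kV))"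
    by (rule lp_mult[OF _ _ p1 V]) (use bX XZ in auto)
  have q2: "ln (1 / \<delta>) \<le> Z ^ (1 + (1 + kV))" by (rule lp_mono[OF Z2(2) p1]) (use bX XZ in auto)
  have q3: "real (n + T + 1) * real (cV * (d + 1) ^ kV) + ln (1 / \<delta>) \<le> Z ^ Suc (1 + (1 + kV))"
    by (rule lp_add[OF Z2(1) q1 q2])
  have q4: "(real (n + T + 1) * real (cV * (d + 1) ^ kV) + ln (1 / \<delta>)) / \<epsilon> \<le> Z ^ (Suc (1 + (1 + kV)) + 1)"
    using lp_mult[OF _ _ q3 p1[of "1/\<epsilon>"]] bX XZ lp less_imp_le[OF eps(1)] by (simp add: divide_inverse)
  have q0: "0 \<le> (real (n + T + 1) * real (cV * (d + 1) ^ kV) + ln (1 / \<delta>)) / \<epsilon>" using lp eps by simp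
  have mmb: "real mm \<le> Z ^ e1"
  proof -
    have "real mm \<le> (real (n + T + 1) * real (cV * (d + 1) ^ kV) + ln (1 / \<delta>)) / \<epsilon> + 1"
      unfolding mm_def by (rule real_nat_ceiling_le[OF q0])
    also have "\<dots> \<le> Z ^ Suc (Suc (1 + (1 + kV)) + 1)"
      by (rule lp_add[OF Z2(1) q4]) (rule const, simp_all)
    finally have r: "real mm \<le> Z ^ Suc (Suc (1 + (1 + kV)) + 1)" .
    show ?thesis by (rule lp_mono[OF Z2(2) r]) (simp add: e1_def)
  qed
  have mm0: "0 \<le> real mm" by simp
  have a1: "real (2 * d + 2 * T + 5) \<le> Z ^ 2"
  proof -
    have "real (2 * d + 2 * T + 5) \<le> 5 * X" using bX by simp
    also have "\<dots> \<le> Z * Z" by (rule mult_mono) (use Z1 XZ bX in auto)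
    finally show ?thesis by (simp add: power2_eq_square)
  qed
  have a3: "real (2 * (n + T) + 6) \<le> Z ^ 2"
  proof -
    have "real (2 * (n + T) + 6) \<le> 6 * X" using bX by simp
    also have "\<dots> \<le> Z * Z" by (rule mult_mono) (use Z1 XZ bX in auto)
    finally show ?thesis by (simp add: power2_eq_square)
  qed
  have a2: "real (T + 1) \<le> Z ^ 1" using bX XZ by simp
  have a4': "real mm * real (T + 1) * real (2 * (n + T) + 6) \<le> Z ^ (e1 + 1 + 2)"
    by (rule lp_mult[OF _ _ lp_mult[OF mm0 _ mmb a2] a3]) simp_all
  have a4: "real (mm * (T + 1) * (2 * (n + T) + 6)) \<le> Z ^ (e1 + 1 + 2)"
    using a4' by (simp only: of_nat_mult)
  have a1': "real (2 * d + 2 * T + 5) \<le> Z ^ (e1 + 1 + 2)"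
    by (rule lp_mono[OF Z2(2) a1]) simp
  have a5: "real (2 * d + 2 * T + 5) + real (mm * (T + 1) * (2 * (n + T) + 6)) \<le> Z ^ Suc (e1 + 1 + 2)"
    by (rule lp_add[OF Z2(1) a1' a4])
  have a6: "3 * (real (2 * d + 2 * T + 5) + real (mm * (T + 1) * (2 * (n + T) + 6))) \<le> Z ^ (1 + Suc (e1 + 1 + 2))"
    by (rule lp_mult[OF _ _ const[of 3 1] a5]) simp_all
  have a7: "3 * (real (2 * d + 2 * T + 5) + real (mm * (T + 1) * (2 * (n + T) + 6))) + 8 \<le> Z ^ Suc (1 + Suc (e1 + 1 + 2))"
    by (rule lp_add[OF Z2(1) a6 const]) simp_all
  have Nb: "real N \<le> Z ^ e2"
  proof -
    have "real N = 3 * (real (2 * d + 2 * T + 5) + real (mm * (T + 1) * (2 * (n + T) + 6))) + 8"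
      unfolding N_def by simp
    then have "real N \<le> Z ^ Suc (1 + Suc (e1 + 1 + 2))" using a7 by simp
    then show ?thesis by (rule lp_mono[OF Z2(2)]) (simp add: e2_def)
  qed
  have N5: "real (N + 5) \<le> Z ^ Suc e2"
  proof -
    have "real N + 5 \<le> Z ^ Suc e2" by (rule lp_add[OF Z2(1) Nb const]) (simp_all add: e2_def)
    then show ?thesis by simp
  qed
  have mm2: "real (mm + 2) \<le> Z ^ Suc e1"
  proof -
    have "real mm + 2 \<le> Z ^ Suc e1" by (rule lp_add[OF Z2(1) mmb const]) (simp_all add: e1_def)
    then show ?thesis by simp
  qed
  have PB: "real ((mm + 2) * (T + 1) * (3 * (N + 5) * (N + 5))) \<le> Z ^ (Suc e1 + 1 + (1 + Suc e2 + Suc e2))"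
  proof -
    have b1: "3 * real (N + 5) * real (N + 5) \<le> Z ^ (1 + Suc e2 + Suc e2)"
      by (rule lp_mult[OF _ _ lp_mult[OF _ _ const[of 3 1] N5] N5]) simp_all
    have "real (mm + 2) * real (T + 1) * (3 * real (N + 5) * real (N + 5)) \<le> Z ^ (Suc e1 + 1 + (1 + Suc e2 + Suc e2))"
      by (rule lp_mult[OF _ _ lp_mult[OF _ _ mm2 a2] b1]) simp_all
    then show ?thesis by (simp only: of_nat_mult of_nat_numeral)
  qed
  have Nd: "real (N + d + 1) \<le> Z ^ Suc e2"
  proof -
    have "real (d + 1) \<le> Z ^ e2" by (rule lp_mono[OF Z2(2) p1]) (use bX XZ in \<open>auto simp: e2_def\<close>)
    then have "real N + real (d + 1) \<le> Z ^ Suc e2" by (rule lp_add[OF Z2(1) Nb])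
    then show ?thesis by simp
  qed
  have TM: "real (cM * (N + d + 1) ^ kM) \<le> Z ^ (1 + Suc e2 * kM)"
  proof -
    have pw: "real (N + d + 1) ^ kM \<le> Z ^ (Suc e2 * kM)" by (rule lp_pow[OF _ Nd]) simp
    have "real cM * real (N + d + 1) ^ kM \<le> Z ^ (1 + Suc e2 * kM)"
      by (rule lp_mult[OF _ _ p1[OF cZ(2)] pw]) simp_all
    then show ?thesis by (simp only: of_nat_mult of_nat_power)
  qed
  have KK: "Suc e1 + 1 + (1 + Suc e2 + Suc e2) \<le> K" "1 + Suc e2 * kM \<le> K"
    unfolding K_def e1_def e2_def by simp_all
  have "real ((mm + 2) * (T + 1) * (3 * (N + 5) * (N + 5)) + cM * (N + d + 1) ^ kM) \<le> Z ^ Suc K"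
    using lp_add[OF Z2(1) lp_mono[OF Z2(2) PB KK(1)] lp_mono[OF Z2(2) TM KK(2)]] by (simp only: of_nat_add)
  also have "\<dots> = B ^ Suc K * X ^ Suc K" unfolding Z_def by (simp add: power_mult_distrib)
  finally show ?thesis .
qed


theorem corollary3p8:
  fixes F :: "nat \<Rightarrow> (bool list \<Rightarrow> bool) set"
    and rep :: "nat \<Rightarrow> bool list \<Rightarrow> (bool list \<Rightarrow> bool)"
    and M :: tm
  assumes "cons_poly_time F rep M"
    and "\<exists>c k::nat. \<forall>d. vcdim (F d) \<le> enat (c * (d + 1) ^ k)"
  shows "\<exists>(c::real) (k::nat). cot_learnable_in_time F rep
           (\<lambda>n d T \<epsilon> \<delta>. nat \<lceil>c * (real n + real d + real T + 1 / \<epsilon> + ln (1 / \<delta>) + 1) ^ k\<rceil>)"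
proof -
  obtain QM SM dM where Mdef: "M = (QM, SM, dM)" by (cases M) auto
  have wf: "tm_wf (QM, SM, dM)" using assms(1) unfolding cons_poly_time_def Mdef by simp
  obtain cM kM :: nat where Mprop: "\<forall>d ps. (\<exists>f\<in>F d. \<forall>(u, v)\<in>set ps. f u = v) \<longrightarrow>
        (let inp = enc_cons d ps; t = cM * (length inp + d + 1) ^ kM; r = tm_output (QM, SM, dM) t inp in
          tm_halts_within (QM, SM, dM) t inp \<and> rep d r \<in> F d \<and> (\<forall>(u, v)\<in>set ps. rep d r u = v))"
    using assms(1) unfolding cons_poly_time_def Mdef by blast
  obtain cV kV :: nat where VC: "\<forall>d. vcdim (F d) \<le> enat (cV * (d + 1) ^ kV)" using assms(2) by blast
  interpret C: cotm QM SM dM by unfold_locales (rule wf)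
  define mf where "mf n d T \<epsilon> \<delta> = nat \<lceil>(real (n + T + 1) * real (cV * (d + 1) ^ kV) + ln (1 / \<delta>)) / \<epsilon>\<rceil>"
    for n d T :: nat and \<epsilon> \<delta> :: real
  define B where "B = real cV + real cM + 1000"
  define K where "K = max (kV + 5 + 2 * (kV + 11 + 1) + 5) ((kV + 11 + 1) * kM + 1)"
  define c where "c = B ^ Suc K"
  define k where "k = Suc K"
  show ?thesis
  proof (intro exI[of _ c] exI[of _ k])
    show "cot_learnable_in_time F rep (\<lambda>n d T \<epsilon> \<delta>. nat \<lceil>c * (real n + real d + real T + 1 / \<epsilon> + ln (1 / \<delta>) + 1) ^ k\<rceil>)"
      unfolding cot_learnable_in_time_def
    proof (intro exI[of _ C.A] exI[of _ mf] conjI allI impI)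
      show "tm_wf C.A" by (rule C.A_wf)
      fix n d T :: nat and \<epsilon> \<delta> :: real
      assume rng: "0 < \<epsilon> \<and> \<epsilon> < 1 \<and> 0 < \<delta> \<and> \<delta> < 1"
      define t where "t = nat \<lceil>c * (real n + real d + real T + 1 / \<epsilon> + ln (1 / \<delta>) + 1) ^ k\<rceil>"
      define mm where "mm = mf n d T \<epsilon> \<delta>"
      define N where "N = 3 * (2 * d + 2 * T + 5 + mm * (T + 1) * (2 * (n + T) + 6)) + 8"
      have tneed: "(mm + 2) * (T + 1) * (3 * (N + 5) * (N + 5)) + cM * (N + d + 1) ^ kM \<le> t"
      proof -
        have "real ((mm + 2) * (T + 1) * (3 * (N + 5) * (N + 5)) + cM * (N + d + 1) ^ kM)
           \<le> B ^ Suc K * (real n + real d + real T + 1 / \<epsilon> + ln (1 / \<delta>) + 1) ^ Suc K"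
          unfolding N_def mm_def mf_def B_def K_def
          by (rule poly_bound) (use rng in auto)
        also have "\<dots> = c * (real n + real d + real T + 1 / \<epsilon> + ln (1 / \<delta>) + 1) ^ k"
          unfolding c_def k_def by simp
        also have "\<dots> \<le> real t" unfolding t_def by linarith
        finally show ?thesis by (simp only: of_nat_le_iff)
      qed
      have learn: "tm_halts_within C.A t (enc_learn d T (map (cot f T) xs)) \<and>
         rep d (tm_output C.A t (enc_learn d T (map (cot f T) xs))) \<in> F d \<and>
         (\<forall>x\<in>set xs. e2e (rep d (tm_output C.A t (enc_learn d T (map (cot f T) xs)))) T x = e2e f T x)"
        if "f \<in> F d" "length xs = mm" "\<forall>x\<in>set xs. length x \<le> n" for f and xs :: "bool list list"
        by (rule C.learner[OF Mprop that(1) that(3) refl]) (use tneed that(2) in \<open>simp add: N_def\<close>)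
      show "let t = nat \<lceil>c * (real n + real d + real T + 1 / \<epsilon> + ln (1 / \<delta>) + 1) ^ k\<rceil>; mm = mf n d T \<epsilon> \<delta> in
           (\<forall>f\<in>F d. \<forall>xs. length xs = mm \<and> (\<forall>x\<in>set xs. length x \<le> n) \<longrightarrow>
              tm_halts_within C.A t (enc_learn d T (map (cot f T) xs))) \<and>
           (\<forall>D. \<forall>f\<in>F d. set_pmf D \<subseteq> {x. length x \<le> n} \<longrightarrow>
              measure_pmf.prob (iid_pmf D mm)
                {xs. measure_pmf.prob D
                   {x. e2e (rep d (tm_output C.A t (enc_learn d T (map (cot f T) xs)))) T x
                       \<noteq> e2e f T x} \<le> \<epsilon>} \<ge> 1 - \<delta>)"
        unfolding Let_def t_def[symmetric] mm_def[symmetric]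
      proof (intro conjI ballI allI impI)
        fix f and xs :: "bool list list" assume "f \<in> F d" "length xs = mm \<and> (\<forall>x\<in>set xs. length x \<le> n)"
        then show "tm_halts_within C.A t (enc_learn d T (map (cot f T) xs))" using learn by blast
      next
        fix D :: "bool list pmf" and f assume f: "f \<in> F d" and supp: "set_pmf D \<subseteq> {x. length x \<le> n}"
        define G where "G = {xs. measure_pmf.prob D
                   {x. e2e (rep d (tm_output C.A t (enc_learn d T (map (cot f T) xs)))) T x \<noteq> e2e f T x} \<le> \<epsilon>}"
        define Bad where "Bad = {xs. \<exists>g\<in>F d. (\<forall>x\<in>set xs. e2e g T x = e2e f T x) \<and>
            \<epsilon> < measure_pmf.prob D {x. e2e g T x \<noteq> e2e f T x}}"
        have VCd: "card S \<le> cV * (d + 1) ^ kV" if "finite S" "shatters (F d) S" for S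
          using vc_card[OF VC[rule_format, of d] that] .
        have mmq: "(real (n + T + 1) * real (cV * (d + 1) ^ kV) + ln (1 / \<delta>)) / \<epsilon> \<le> real mm"
          unfolding mm_def mf_def by (rule real_nat_ceiling_ge)
        have bad: "measure_pmf.prob (iid_pmf D mm) Bad \<le> \<delta>"
          unfolding Bad_def by (rule stat[OF VCd supp _ _ _ mmq]) (use rng in auto)
        have sub: "(UNIV - G) \<inter> set_pmf (iid_pmf D mm) \<subseteq> Bad"
        proof
          fix xs assume xs: "xs \<in> (UNIV - G) \<inter> set_pmf (iid_pmf D mm)"
          then have "length xs = mm" "set xs \<subseteq> set_pmf D" using set_iid by blast+
          then have l: "length xs = mm" "\<forall>x\<in>set xs. length x \<le> n" using supp by auto
          show "xs \<in> Bad" using learn[OF f l] xs unfolding Bad_def G_def by force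
        qed
        have "measure_pmf.prob (iid_pmf D mm) (UNIV - G) = measure_pmf.prob (iid_pmf D mm) ((UNIV - G) \<inter> set_pmf (iid_pmf D mm))"
          by (simp add: measure_Int_set_pmf)
        also have "\<dots> \<le> measure_pmf.prob (iid_pmf D mm) Bad"
          by (rule measure_pmf.finite_measure_mono[OF sub]) simp
        finally have "measure_pmf.prob (iid_pmf D mm) (UNIV - G) \<le> \<delta>" using bad by simp
        moreover have "measure_pmf.prob (iid_pmf D mm) (UNIV - G) = 1 - measure_pmf.prob (iid_pmf D mm) G"
          using measure_pmf.prob_compl[of G "iid_pmf D mm"] by simp
        ultimately show "1 - \<delta> \<le> measure_pmf.prob (iid_pmf D mm) G" by simp
      qed
    qed
  qed
qed


end
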